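(* Let $\sigma\in\mathcal{S}_n(132)$, and let $s$ be the number of elements $(i,j)\in\mathcal{E}(\sigma)$ satisfying $i+j<n$. Then the number of Schröder permutations $\pi\in\mathcal{S}_n$ with $\phi(\pi)=\sigma$ equals $2^s$.
   Context: $\mathcal{S}_n(T)$ is the set of permutations of $\{1,\dots,n\}$ avoiding every pattern in $T$ (a permutation avoids $\tau\in\mathcal{S}_k$ if no subsequence of length $k$ is in the same relative order as $\tau$). A Schröder permutation is one avoiding both $1243$ and $2143$. Represent $\pi\in\mathcal{S}_n$ by an $n\times n$ array, rows $i$ numbered top to bottom, columns $j$ left to right, with a dot in square $(i,\pi_i)$. The diagram $D(\pi)$ is the set of squares $(i,j)$ with $\pi_i>j$ and $\pi^{-1}(j)>i$. The essential set $\mathcal{E}(\pi)$ is the set of $(i,j)\in D(\pi)$ with $(i+1,j)\notin D(\pi)$ and $(i,j+1)\notin D(\pi)$ (squares outside the array count as not in $D(\pi)$). The rank of $(i,j)$ with respect to $\pi$ is $\rho_\pi(i,j)=\#\{k<i:\pi_k<j\}$; $\mathcal{E}_r(\pi)$ is the set of elements of $\mathcal{E}(\pi)$ of rank $r$. A permutation is uniquely determined by its essential set together with the ranks of its elements (Fulton). For a Schröder permutation $\pi\in\mathcal{S}_n$, let $\mathcal{E}^*(\pi)$ be obtained from $\mathcal{E}(\pi)$ by replacing each $(i,j)\in\mathcal{E}_1(\pi)$ by $(i-1,j-1)$; there is a unique $\sigma\in\mathcal{S}_n$ with $\mathcal{E}(\sigma)=\mathcal{E}^*(\pi)$ and all elements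 of $\mathcal{E}(\sigma)$ of rank $0$ (with respect to $\sigma$), and one sets $\phi(\pi)=\sigma$; this $\sigma$ avoids $132$. *)

theory Defs
  imports "HOL-Combinatorics.Permutations"
begin

text \<open>Permutations of {1..n} are functions \<pi> with \<pi> permutes {1..n}
  (so \<pi> i = i outside {1..n}). Rows i and columns j range over {1..n}.\<close>

definition contains_pattern :: "nat \<Rightarrow> (nat \<Rightarrow> nat) \<Rightarrow> nat list \<Rightarrow> bool" where
  "contains_pattern n \<pi> \<tau> \<longleftrightarrow>
     (\<exists>f. strict_mono_on {0..<length \<tau>} f \<and> (\<forall>a<length \<tau>. f a \<in> {1..n}) \<and>
          (\<forall>a<length \<tau>. \<forall>b<length \<tau>. \<pi> (f a) < \<pi> (f b) \<longleftrightarrow> \<tau> ! a < \<tau> ! b))"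

definition avoids :: "nat \<Rightarrow> (nat \<Rightarrow> nat) \<Rightarrow> nat list \<Rightarrow> bool" where
  "avoids n \<pi> \<tau> \<longleftrightarrow> \<not> contains_pattern n \<pi> \<tau>"

definition schroeder :: "nat \<Rightarrow> (nat \<Rightarrow> nat) \<Rightarrow> bool" where
  "schroeder n \<pi> \<longleftrightarrow> avoids n \<pi> [1,2,4,3] \<and> avoids n \<pi> [2,1,4,3]"

definition diagram :: "nat \<Rightarrow> (nat \<Rightarrow> nat) \<Rightarrow> (nat \<times> nat) set" where
  "diagram n \<pi> = {(i,j). i \<in> {1..n} \<and> j \<in> {1..n} \<and> \<pi> i > j \<and> inv \<pi> j > i}"

definition ess :: "nat \<Rightarrow> (nat \<Rightarrow> nat) \<Rightarrow> (nat \<times> nat) set" where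
  "ess n \<pi> = {(i,j). (i,j) \<in> diagram n \<pi> \<and> (i+1,j) \<notin> diagram n \<pi> \<and> (i,j+1) \<notin> diagram n \<pi>}"

definition rank :: "(nat \<Rightarrow> nat) \<Rightarrow> nat \<times> nat \<Rightarrow> nat" where
  "rank \<pi> ij = card {k. 1 \<le> k \<and> k < fst ij \<and> \<pi> k < snd ij}"

definition ess_star :: "nat \<Rightarrow> (nat \<Rightarrow> nat) \<Rightarrow> (nat \<times> nat) set" where
  "ess_star n \<pi> = {e \<in> ess n \<pi>. rank \<pi> e \<noteq> 1}
                 \<union> (\<lambda>(i,j). (i-1, j-1)) ` {e \<in> ess n \<pi>. rank \<pi> e = 1}"

definition phi :: "nat \<Rightarrow> (nat \<Rightarrow> nat) \<Rightarrow> (nat \<Rightarrow> nat)" where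
  "phi n \<pi> = (THE \<sigma>. \<sigma> permutes {1..n} \<and> ess n \<sigma> = ess_star n \<pi> \<and>
                      (\<forall>e\<in>ess n \<sigma>. rank \<sigma> e = 0))"

end

theory Submission
  imports Defs
begin

definition pre :: "(nat \<Rightarrow> nat) \<Rightarrow> nat \<Rightarrow> nat set" where
  "pre \<pi> i = \<pi> ` {1..<i}"

definition code :: "(nat \<Rightarrow> nat) \<Rightarrow> nat \<Rightarrow> nat" where
  "code \<pi> i = card {j. 1 \<le> j \<and> j < \<pi> i \<and> j \<notin> pre \<pi> i}"

definition Am :: "nat \<Rightarrow> (nat \<Rightarrow> nat) \<Rightarrow> nat \<Rightarrow> nat" where
  "Am n \<pi> i = Min (insert (Suc n) (pre \<pi> i))"

lemma fin_pre[simp]: "finite (pre \<pi> i)"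
  by (simp add: pre_def)

lemma pre_Suc: "1 \<le> i \<Longrightarrow> pre \<pi> (Suc i) = insert (\<pi> i) (pre \<pi> i)"
  unfolding pre_def by (auto simp: atLeastLessThanSuc)

lemma pre_1[simp]: "pre \<pi> 1 = {}"
  by (simp add: pre_def)

lemma pre_mono: "i \<le> k \<Longrightarrow> pre \<pi> i \<subseteq> pre \<pi> k"
  unfolding pre_def by auto

context
  fixes n :: nat and \<pi> :: "nat \<Rightarrow> nat"
  assumes perm: "\<pi> permutes {1..n}"
begin

lemma p_in: "i \<in> {1..n} \<Longrightarrow> \<pi> i \<in> {1..n}"
  using permutes_in_image[OF perm] by (rule iffD2)

lemma p_out: "i \<notin> {1..n} \<Longrightarrow> \<pi> i = i"
  using perm by (simp add: permutes_not_in)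

lemma p_inj: "inj \<pi>"
  using perm by (rule permutes_inj)

lemma p_not_pre: "\<pi> i \<notin> pre \<pi> i"
proof
  assume "\<pi> i \<in> pre \<pi> i"
  then obtain k where k: "k \<in> {1..<i}" "\<pi> k = \<pi> i" unfolding pre_def by (rule imageE) simp
  from k(2) have "k = i" by (rule injD[OF p_inj])
  with k show False by simp
qed

lemma pre_sub: assumes "i \<le> Suc n" shows "pre \<pi> i \<subseteq> {1..n}"
proof
  fix x assume "x \<in> pre \<pi> i"
  then obtain k where k: "k \<in> {1..<i}" "x = \<pi> k" unfolding pre_def by blast
  then have "k \<in> {1..n}" using assms by auto
  then show "x \<in> {1..n}" using k p_in by simp
qed

lemma card_pre: "1 \<le> i \<Longrightarrow> card (pre \<pi> i) = i - 1"
proof -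
  have "card (\<pi> ` {1..<i}) = card {1..<i}"
    using inj_on_subset[OF p_inj subset_UNIV] by (rule card_image)
  then show ?thesis by (simp add: pre_def)
qed

lemma pre_all: "pre \<pi> (Suc n) = {1..n}"
proof -
  have "pre \<pi> (Suc n) = \<pi> ` {1..n}" unfolding pre_def by (simp add: atLeastLessThanSuc_atLeastAtMost)
  also have "\<dots> = {1..n}" using perm by (simp add: permutes_image)
  finally show ?thesis .
qed

lemma pre_mem: "x \<in> pre \<pi> i \<longleftrightarrow> (\<exists>k. 1 \<le> k \<and> k < i \<and> \<pi> k = x)"
  unfolding pre_def by auto

lemma diag_iff: "(i,j) \<in> diagram n \<pi> \<longleftrightarrow> 1 \<le> i \<and> i \<le> n \<and> 1 \<le> j \<and> j < \<pi> i \<and> j \<notin> pre \<pi> i"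
proof
  assume "(i,j) \<in> diagram n \<pi>"
  then have h: "i \<in> {1..n}" "j \<in> {1..n}" "j < \<pi> i" "inv \<pi> j > i" unfolding diagram_def by auto
  have "j \<notin> pre \<pi> i"
  proof
    assume "j \<in> pre \<pi> i"
    then obtain k where k: "1 \<le> k" "k < i" "\<pi> k = j" by (auto simp: pre_mem)
    then have "inv \<pi> j = k" using p_inj by (metis inv_f_f)
    with h k show False by simp
  qed
  with h show "1 \<le> i \<and> i \<le> n \<and> 1 \<le> j \<and> j < \<pi> i \<and> j \<notin> pre \<pi> i" by auto
next
  assume a: "1 \<le> i \<and> i \<le> n \<and> 1 \<le> j \<and> j < \<pi> i \<and> j \<notin> pre \<pi> i"
  then have pi: "\<pi> i \<le> n" using p_in[of i] by auto
  have j: "j \<in> {1..n}" using a pi by auto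
  define k where "k = inv \<pi> j"
  have pk: "\<pi> k = j" unfolding k_def using perm by (meson permutes_inverses(1))
  have kin: "k \<in> {1..n}"
  proof (rule ccontr)
    assume "k \<notin> {1..n}" then have "\<pi> k = k" by (rule p_out)
    with pk j \<open>k \<notin> {1..n}\<close> show False by simp
  qed
  have "k > i"
  proof (rule ccontr)
    assume "\<not> i < k"
    then have "k < i \<or> k = i" by auto
    then show False
    proof
      assume "k < i" then have "j \<in> pre \<pi> i" using kin pk by (auto simp: pre_mem)
      with a show False by simp
    next
      assume "k = i" with pk a show False by simp
    qed
  qed
  then show "(i,j) \<in> diagram n \<pi>" using a j by (simp add: diagram_def k_def)
qed

lemma rank_eq: "rank \<pi> (i,j) = card {p \<in> pre \<pi> i. p < j}"
proof -
  have "{p \<in> pre \<pi> i. p < j} = \<pi> ` {k. 1 \<le> k \<and> k < i \<and> \<pi> k < j}"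
    unfolding pre_def by auto
  moreover have "inj_on \<pi> {k. 1 \<le> k \<and> k < i \<and> \<pi> k < j}" using inj_on_subset[OF p_inj subset_UNIV] by blast
  ultimately show ?thesis unfolding rank_def by (simp add: card_image)
qed

lemma code_le: assumes "i \<in> {1..n}" shows "code \<pi> i \<le> n - i"
proof -
  have "{j. 1 \<le> j \<and> j < \<pi> i \<and> j \<notin> pre \<pi> i} \<subseteq> {1..n} - pre \<pi> (Suc i)"
    using p_in[OF assms] assms by (auto simp: pre_Suc)
  moreover have "card ({1..n} - pre \<pi> (Suc i)) = n - i"
    using assms pre_sub[of "Suc i"] card_pre[of "Suc i"] by (simp add: card_Diff_subset)
  ultimately show ?thesis unfolding code_def
    by (metis (no_types, lifting) card_mono finite_Diff finite_atLeastAtMost)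
qed

lemma code_last: "code \<pi> (Suc n) = 0"
proof -
  have "\<pi> (Suc n) = Suc n" using p_out by auto
  then show ?thesis unfolding code_def using pre_all by auto
qed

end

lemma cnt_strict:
  fixes P :: "nat set"
  assumes "x \<notin> P" "1 \<le> x" "x < y"
  shows "card {j. 1 \<le> j \<and> j < x \<and> j \<notin> P} < card {j. 1 \<le> j \<and> j < y \<and> j \<notin> P}"
proof (rule psubset_card_mono)
  show "finite {j. 1 \<le> j \<and> j < y \<and> j \<notin> P}" by (rule finite_subset[of _ "{..<y}"]) auto
  show "{j. 1 \<le> j \<and> j < x \<and> j \<notin> P} \<subset> {j. 1 \<le> j \<and> j < y \<and> j \<notin> P}"
  proof
    show "{j. 1 \<le> j \<and> j < x \<and> j \<notin> P} \<subseteq> {j. 1 \<le> j \<and> j < y \<and> j \<notin> P}"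
      using assms(3) by auto
    have "x \<in> {j. 1 \<le> j \<and> j < y \<and> j \<notin> P}" using assms by simp
    moreover have "x \<notin> {j. 1 \<le> j \<and> j < x \<and> j \<notin> P}" by simp
    ultimately show "{j. 1 \<le> j \<and> j < x \<and> j \<notin> P} \<noteq> {j. 1 \<le> j \<and> j < y \<and> j \<notin> P}" by blast
  qed
qed

lemma code_inj:
  assumes s: "\<sigma> permutes {1..n}" and t: "\<tau> permutes {1..n}"
    and c: "\<And>i. i \<in> {1..n} \<Longrightarrow> code \<sigma> i = code \<tau> i"
  shows "\<sigma> = \<tau>"
proof -
  have main: "i \<in> {1..n} \<longrightarrow> \<sigma> i = \<tau> i" for i
  proof (induction i rule: less_induct)
    case (less i)
    show ?case
    proof
      assume i: "i \<in> {1..n}"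
      have "pre \<sigma> i = pre \<tau> i" unfolding pre_def
      proof (rule image_cong)
        fix k assume "k \<in> {1..<i}"
        then show "\<sigma> k = \<tau> k" using less.IH[of k] i by auto
      qed simp
      then have eq: "code \<tau> i = card {j. 1 \<le> j \<and> j < \<tau> i \<and> j \<notin> pre \<sigma> i}"
        unfolding code_def by simp
      have si: "\<sigma> i \<in> {1..n}" using p_in[OF s i] .
      have ti: "\<tau> i \<in> {1..n}" using p_in[OF t i] .
      have ns: "\<sigma> i \<notin> pre \<sigma> i" by (rule p_not_pre[OF s])
      have nt: "\<tau> i \<notin> pre \<sigma> i" using p_not_pre[OF t, of i] \<open>pre \<sigma> i = pre \<tau> i\<close> by simp
      have ci: "code \<sigma> i = code \<tau> i" using c i .
      show "\<sigma> i = \<tau> i"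
      proof (rule ccontr)
        assume "\<sigma> i \<noteq> \<tau> i"
        then have "\<sigma> i < \<tau> i \<or> \<tau> i < \<sigma> i" by arith
        then show False
        proof
          assume "\<sigma> i < \<tau> i"
          from cnt_strict[OF ns _ this] si have "code \<sigma> i < code \<tau> i"
            unfolding eq by (simp add: code_def)
          with ci show False by simp
        next
          assume "\<tau> i < \<sigma> i"
          from cnt_strict[OF nt _ this] ti have "code \<tau> i < code \<sigma> i"
            unfolding eq by (simp add: code_def)
          with ci show False by simp
        qed
      qed
    qed
  qed
  show ?thesis
  proof
    fix i show "\<sigma> i = \<tau> i"
    proof (cases "i \<in> {1..n}")
      case True then show ?thesis using main by blast
    next
      case False then show ?thesis using p_out[OF s False] p_out[OF t False] by simp
    qed
  qed
qed

lemma code_surj: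
  assumes c: "\<And>i. i \<in> {1..n} \<Longrightarrow> c i \<le> n - i"
  shows "\<exists>\<tau>. \<tau> permutes {1..n} \<and> (\<forall>i\<in>{1..n}. code \<tau> i = c i)"
proof -
  define Perms where "Perms = {p. p permutes {1..n::nat}}"
  define CS where "CS = PiE {1..n} (\<lambda>i. {0..n-i})"
  define F where "F = (\<lambda>p. restrict (code p) {1..n})"
  have img: "F ` Perms \<subseteq> CS"
  proof
    fix x assume "x \<in> F ` Perms"
    then obtain p where p: "p permutes {1..n}" "x = F p" unfolding Perms_def by blast
    show "x \<in> CS" unfolding CS_def p(2) F_def using code_le[OF p(1)] by auto
  qed
  have inj: "inj_on F Perms"
  proof
    fix p q assume "p \<in> Perms" "q \<in> Perms" "F p = F q"
    then have p: "p permutes {1..n}" and q: "q permutes {1..n}" unfolding Perms_def by auto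
    have "\<And>i. i \<in> {1..n} \<Longrightarrow> code p i = code q i"
    proof -
      fix i assume "i \<in> {1..n}"
      then show "code p i = code q i" using fun_cong[OF \<open>F p = F q\<close>, of i] unfolding F_def by simp
    qed
    then show "p = q" by (rule code_inj[OF p q])
  qed
  have cP: "card Perms = fact n" unfolding Perms_def by (rule card_permutations) auto
  have "card CS = (\<Prod>i\<in>{1..n}. card {0..n-i})" unfolding CS_def by (rule card_PiE) simp
  also have "\<dots> = (\<Prod>i\<in>{1..n}. (n + 1) - i)" by (rule prod.cong) auto
  also have "\<dots> = \<Prod>{1..n}" using prod.atLeastAtMost_rev [of "\<lambda>i. i" 1 n] by simp
  also have "\<dots> = fact n" by (simp add: fact_prod)
  finally have cC: "card CS = fact n" .
  have finC: "finite CS" unfolding CS_def by (rule finite_PiE) auto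
  have "card (F ` Perms) = fact n" using card_image[OF inj] cP by simp
  then have "F ` Perms = CS" using card_subset_eq[OF finC img] cC by simp
  moreover have "restrict c {1..n} \<in> CS" unfolding CS_def using c by auto
  ultimately obtain p where p: "p \<in> Perms" "F p = restrict c {1..n}" by (metis imageE)
  show ?thesis
  proof (intro exI conjI ballI)
    show "p permutes {1..n}" using p(1) unfolding Perms_def by simp
    fix i assume "i \<in> {1..n}"
    then show "code p i = c i" using fun_cong[OF p(2), of i] unfolding F_def by simp
  qed
qed


lemma Am_1[simp]: "Am n \<pi> (Suc 0) = Suc n"
  by (simp add: Am_def pre_def)

lemma Am_le: "x \<in> pre \<pi> i \<Longrightarrow> Am n \<pi> i \<le> x"
  unfolding Am_def by (simp add: Min_le_iff)

lemma Am_le_Suc: "Am n \<pi> i \<le> Suc n"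
  unfolding Am_def by (simp add: Min_le_iff)

lemma Am_Suc: "1 \<le> i \<Longrightarrow> Am n \<pi> (Suc i) = min (Am n \<pi> i) (\<pi> i)"
proof -
  assume i: "1 \<le> i"
  have "Am n \<pi> (Suc i) = Min (insert (\<pi> i) (insert (Suc n) (pre \<pi> i)))"
    unfolding Am_def pre_Suc[OF i] by (simp add: insert_commute)
  also have "\<dots> = min (\<pi> i) (Am n \<pi> i)" unfolding Am_def by (rule Min.insert) auto
  finally show ?thesis by (simp add: min.commute)
qed

lemma below_Am: "j < Am n \<pi> i \<Longrightarrow> j \<notin> pre \<pi> i"
proof
  assume "j < Am n \<pi> i" "j \<in> pre \<pi> i"
  then have "Am n \<pi> i \<le> j" by (simp add: Am_le)
  with \<open>j < Am n \<pi> i\<close> show False by simp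
qed


context
  fixes n :: nat and \<pi> :: "nat \<Rightarrow> nat"
  assumes perm: "\<pi> permutes {1..n}"
begin

lemma pre_ge1: "i \<le> Suc n \<Longrightarrow> x \<in> pre \<pi> i \<Longrightarrow> 1 \<le> x"
  using pre_sub[OF perm] by fastforce

lemma Am_mem: assumes "2 \<le> i" "i \<le> Suc n" shows "Am n \<pi> i \<in> pre \<pi> i"
proof -
  have ne: "pre \<pi> i \<noteq> {}" using assms unfolding pre_def by auto
  have le: "Min (pre \<pi> i) \<le> n" using pre_sub[OF perm assms(2)] ne Min_in[of "pre \<pi> i"] by fastforce
  have "Am n \<pi> i = min (Suc n) (Min (pre \<pi> i))" unfolding Am_def using ne by (simp add: Min.insert)
  then have "Am n \<pi> i = Min (pre \<pi> i)" using le by simp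
  then show ?thesis using ne Min_in by simp
qed

lemma Am_ge1: "i \<le> Suc n \<Longrightarrow> 1 \<le> Am n \<pi> i"
proof (cases "i \<le> 1")
  case True
  then have "pre \<pi> i = {}" unfolding pre_def by auto
  then show ?thesis by (simp add: Am_def)
next
  case False
  assume "i \<le> Suc n"
  then show ?thesis using Am_mem[of i] False pre_ge1 by simp
qed

lemma Am_last: "Am n \<pi> (Suc n) = 1"
proof (cases "n = 0")
  case True then show ?thesis by (simp add: Am_def pre_def)
next
  case False
  have "1 \<in> pre \<pi> (Suc n)" using False pre_all[OF perm] by simp
  then have "Am n \<pi> (Suc n) \<le> 1" by (rule Am_le)
  with Am_ge1[of "Suc n"] show ?thesis by simp
qed

lemma code_alt: "i \<in> {1..n} \<Longrightarrow> code \<pi> i + card {p \<in> pre \<pi> i. p < \<pi> i} = \<pi> i - 1"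
proof -
  assume i: "i \<in> {1..n}"
  have "{1..<\<pi> i} = {j. 1 \<le> j \<and> j < \<pi> i \<and> j \<notin> pre \<pi> i} \<union> {p \<in> pre \<pi> i. p < \<pi> i}"
    using pre_ge1[of i] i by auto
  moreover have "{j. 1 \<le> j \<and> j < \<pi> i \<and> j \<notin> pre \<pi> i} \<inter> {p \<in> pre \<pi> i. p < \<pi> i} = {}" by auto
  moreover have "finite {j. 1 \<le> j \<and> j < \<pi> i \<and> j \<notin> pre \<pi> i}"
    by (rule finite_subset[of _ "{..<\<pi> i}"]) auto
  ultimately have "card {1..<\<pi> i} = code \<pi> i + card {p \<in> pre \<pi> i. p < \<pi> i}"
    unfolding code_def by (simp add: card_Un_disjoint)
  then show ?thesis by simp
qed

lemma pi_ne_Am: assumes "i \<in> {1..n}" shows "\<pi> i \<noteq> Am n \<pi> i"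
proof (cases "i = 1")
  case True then show ?thesis using p_in[OF perm assms] by auto
next
  case False
  then have "Am n \<pi> i \<in> pre \<pi> i" using Am_mem assms by auto
  then show ?thesis using p_not_pre[OF perm, of i] by auto
qed

lemma GLa: assumes "i \<in> {1..n}" "\<pi> i < Am n \<pi> i" shows "code \<pi> i = \<pi> i - 1"
proof -
  have "{p \<in> pre \<pi> i. p < \<pi> i} = {}"
  proof (rule ccontr)
    assume "{p \<in> pre \<pi> i. p < \<pi> i} \<noteq> {}"
    then obtain p where "p \<in> pre \<pi> i" "p < \<pi> i" by blast
    then have "Am n \<pi> i \<le> p" by (simp add: Am_le)
    with \<open>p < \<pi> i\<close> assms(2) show False by simp
  qed
  then have "card {p \<in> pre \<pi> i. p < \<pi> i} = 0" by (simp only: card.empty)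
  then show ?thesis using code_alt[OF assms(1)] by linarith
qed

lemma GLc: assumes i: "i \<in> {1..n}" and lt: "Am n \<pi> i < \<pi> i"
  shows "Am n \<pi> i - 1 \<le> code \<pi> i" "code \<pi> i + 2 \<le> \<pi> i"
proof -
  have "{1..<Am n \<pi> i} \<subseteq> {j. 1 \<le> j \<and> j < \<pi> i \<and> j \<notin> pre \<pi> i}"
    using lt below_Am by auto
  then have "card {1..<Am n \<pi> i} \<le> code \<pi> i" unfolding code_def
    by (rule card_mono[rotated]) (rule finite_subset[of _ "{..<\<pi> i}"], auto)
  then show "Am n \<pi> i - 1 \<le> code \<pi> i" by simp
  have "i \<noteq> 1" using lt Am_1 p_in[OF perm i] by auto
  then have "Am n \<pi> i \<in> pre \<pi> i" using Am_mem i by auto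
  then have "Am n \<pi> i \<in> {p \<in> pre \<pi> i. p < \<pi> i}" using lt by simp
  then have "card {p \<in> pre \<pi> i. p < \<pi> i} \<ge> 1"
    by (metis (no_types, lifting) One_nat_def Suc_leI card_gt_0_iff emptyE finite_subset fin_pre mem_Collect_eq subsetI)
  then show "code \<pi> i + 2 \<le> \<pi> i" using code_alt[OF i] Am_ge1[of i] lt i by linarith
qed

lemma GL1: assumes i: "i \<in> {1..n}" and c: "code \<pi> i < Am n \<pi> i - 1"
  shows "\<pi> i = Suc (code \<pi> i)" "Am n \<pi> (Suc i) = \<pi> i"
proof -
  have "\<pi> i < Am n \<pi> i"
  proof (rule ccontr)
    assume "\<not> \<pi> i < Am n \<pi> i"
    then have "Am n \<pi> i < \<pi> i" using pi_ne_Am[OF i] by simp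
    then show False using GLc(1)[OF i] c by simp
  qed
  moreover have "code \<pi> i = \<pi> i - 1" using GLa[OF i] \<open>\<pi> i < Am n \<pi> i\<close> .
  moreover have "1 \<le> \<pi> i" using p_in[OF perm i] by simp
  ultimately show "\<pi> i = Suc (code \<pi> i)" by linarith
  show "Am n \<pi> (Suc i) = \<pi> i" using Am_Suc[of i n \<pi>] i \<open>\<pi> i < Am n \<pi> i\<close> by simp
qed

lemma GL2: assumes i: "i \<in> {1..n}" and c: "Am n \<pi> i - 1 \<le> code \<pi> i"
  shows "Am n \<pi> i < \<pi> i" "Am n \<pi> (Suc i) = Am n \<pi> i"
proof -
  show "Am n \<pi> i < \<pi> i"
  proof (rule ccontr)
    assume "\<not> Am n \<pi> i < \<pi> i"
    then have "\<pi> i < Am n \<pi> i" using pi_ne_Am[OF i] by simp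
    moreover have "code \<pi> i = \<pi> i - 1" using GLa[OF i] \<open>\<pi> i < Am n \<pi> i\<close> .
    moreover have "1 \<le> \<pi> i" using p_in[OF perm i] by simp
    ultimately show False using c by linarith
  qed
  then show "Am n \<pi> (Suc i) = Am n \<pi> i" using Am_Suc[of i n \<pi>] i by simp
qed

lemma GL3: assumes i: "i \<in> {1..n}"
  shows "Am n \<pi> (Suc i) - 1 = min (Am n \<pi> i - 1) (code \<pi> i)"
proof (cases "code \<pi> i < Am n \<pi> i - 1")
  case True then show ?thesis using GL1[OF i True] by simp
next
  case False then show ?thesis using GL2[OF i] by simp
qed

end

lemma contains_by_list:
  assumes "length ps = length \<tau>" "sorted_wrt (<) ps" "set ps \<subseteq> {1..n}"
    "\<forall>a<length \<tau>. \<forall>b<length \<tau>. \<pi> (ps!a) < \<pi> (ps!b) \<longleftrightarrow> \<tau>!a < \<tau>!b"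
  shows "contains_pattern n \<pi> \<tau>"
  unfolding contains_pattern_def
proof (intro exI[of _ "\<lambda>a. ps ! a"] conjI)
  show "strict_mono_on {0..<length \<tau>} ((!) ps)"
  proof (rule strict_mono_onI)
    fix r s assume "r \<in> {0..<length \<tau>}" "s \<in> {0..<length \<tau>}" "r < s"
    then show "ps ! r < ps ! s" using sorted_wrt_nth_less[OF assms(2)] assms(1) by simp
  qed
  show "\<forall>a<length \<tau>. ps ! a \<in> {1..n}"
  proof (intro allI impI)
    fix a assume "a < length \<tau>"
    then have "ps ! a \<in> set ps" using assms(1) by simp
    then show "ps ! a \<in> {1..n}" using assms(3) by (rule subsetD[rotated])
  qed
  show "\<forall>a<length \<tau>. \<forall>b<length \<tau>. \<pi> (ps ! a) < \<pi> (ps ! b) \<longleftrightarrow> \<tau> ! a < \<tau> ! b" using assms(4) .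
qed

lemma all_less_3: "(\<forall>a<Suc (Suc (Suc 0)). P a) \<longleftrightarrow> P 0 \<and> P (Suc 0) \<and> P (Suc (Suc 0))"
  by (auto simp: less_Suc_eq)

lemma all_less_4: "(\<forall>a<Suc (Suc (Suc (Suc 0))). P a) \<longleftrightarrow> P 0 \<and> P (Suc 0) \<and> P (Suc (Suc 0)) \<and> P (Suc (Suc (Suc 0)))"
  by (auto simp: less_Suc_eq)

lemma two_elems:
  assumes "finite K" "2 \<le> card K"
  obtains x y where "x \<in> K" "y \<in> K" "x < (y::nat)"
proof -
  have "K \<noteq> {}"
  proof
    assume "K = {}" with assms(2) show False by simp
  qed
  then obtain x where x: "x \<in> K" by blast
  have "card (K - {x}) \<ge> 1" using assms x by simp
  then have "K - {x} \<noteq> {}" by (intro notI) simp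
  then obtain y where y: "y \<in> K" "y \<noteq> x" by blast
  show ?thesis
  proof (cases "x < y")
    case True then show ?thesis by (rule that[OF x y(1)])
  next
    case False then have "y < x" using y by simp
    then show ?thesis by (rule that[OF y(1) x])
  qed
qed

context
  fixes n :: nat and \<pi> :: "nat \<Rightarrow> nat"
  assumes perm: "\<pi> permutes {1..n}"
begin

lemma inv_facts: assumes "j \<in> {1..n}" shows "\<pi> (inv \<pi> j) = j" "inv \<pi> j \<in> {1..n}"
proof -
  show pk: "\<pi> (inv \<pi> j) = j" using perm by (meson permutes_inverses(1))
  show "inv \<pi> j \<in> {1..n}"
  proof (rule ccontr)
    assume "inv \<pi> j \<notin> {1..n}" then have "\<pi> (inv \<pi> j) = inv \<pi> j" by (rule p_out[OF perm])
    with pk assms \<open>inv \<pi> j \<notin> {1..n}\<close> show False by simp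
  qed
qed

lemma bad_cell:
  assumes cell: "(i,j) \<in> diagram n \<pi>" and r: "1 \<le> rank \<pi> (i,j)"
  obtains k d where "1 \<le> k" "k < i" "\<pi> k < j" "i < d" "d \<in> {1..n}" "\<pi> d = j" "i \<in> {1..n}" "j < \<pi> i"
proof -
  have c: "i \<in> {1..n}" "j \<in> {1..n}" "j < \<pi> i" "inv \<pi> j > i" using cell unfolding diagram_def by auto
  have "card {k. 1 \<le> k \<and> k < i \<and> \<pi> k < j} \<noteq> 0" using r unfolding rank_def fst_conv snd_conv by linarith
  then have "{k. 1 \<le> k \<and> k < i \<and> \<pi> k < j} \<noteq> {}" by (rule contrapos_nn) simp
  then obtain k where "1 \<le> k" "k < i" "\<pi> k < j" by blast
  then show ?thesis using c inv_facts[OF c(2)] by (intro that[of k "inv \<pi> j"]) auto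
qed

lemma pat132:
  assumes av: "avoids n \<pi> [1,3,2]" and cell: "(i,j) \<in> diagram n \<pi>"
  shows "rank \<pi> (i,j) = 0"
proof (rule ccontr)
  assume "rank \<pi> (i,j) \<noteq> 0"
  then have "1 \<le> rank \<pi> (i,j)" by simp
  then obtain k d where kd: "1 \<le> k" "k < i" "\<pi> k < j" "i < d" "d \<in> {1..n}" "\<pi> d = j" "i \<in> {1..n}" "j < \<pi> i"
    using bad_cell[OF cell] by blast
  have "contains_pattern n \<pi> [1,3,2]"
  proof (rule contains_by_list[of "[k,i,d]"])
    show "set [k,i,d] \<subseteq> {1..n}" using kd by auto
    show "sorted_wrt (<) [k,i,d]" using kd by auto
    show "\<forall>a<length [1::nat,3,2]. \<forall>b<length [1::nat,3,2]. \<pi> ([k,i,d] ! a) < \<pi> ([k,i,d] ! b) \<longleftrightarrow> [1::nat,3,2] ! a < [1,3,2] ! b"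
      using kd by (simp add: all_less_3)
  qed simp
  with av show False unfolding avoids_def by simp
qed

lemma patS: "schroeder n \<pi> \<longleftrightarrow> (\<forall>i j. (i,j) \<in> diagram n \<pi> \<longrightarrow> rank \<pi> (i,j) \<le> 1)"
proof
  assume S: "schroeder n \<pi>"
  show "\<forall>i j. (i,j) \<in> diagram n \<pi> \<longrightarrow> rank \<pi> (i,j) \<le> 1"
  proof (intro allI impI, rule ccontr)
    fix i j assume cell: "(i,j) \<in> diagram n \<pi>" and "\<not> rank \<pi> (i, j) \<le> 1"
    then have r2: "2 \<le> rank \<pi> (i,j)" by simp
    have c: "i \<in> {1..n}" "j \<in> {1..n}" "j < \<pi> i" "inv \<pi> j > i" using cell unfolding diagram_def by auto
    define d where "d = inv \<pi> j"
    have d: "\<pi> d = j" "d \<in> {1..n}" "i < d" using inv_facts[OF c(2)] c(4) unfolding d_def by auto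
    have fin: "finite {k. 1 \<le> k \<and> k < i \<and> \<pi> k < j}" by (rule finite_subset[of _ "{..<i}"]) auto
    obtain k1 k2 where k: "k1 \<in> {k. 1 \<le> k \<and> k < i \<and> \<pi> k < j}" "k2 \<in> {k. 1 \<le> k \<and> k < i \<and> \<pi> k < j}" "k1 < k2"
      using two_elems[OF fin] r2 unfolding rank_def by auto
    have ne: "\<pi> k1 \<noteq> \<pi> k2" using k(3) injD[OF p_inj[OF perm]] by fastforce
    have pos: "set [k1,k2,i,d] \<subseteq> {1..n}" "sorted_wrt (<) [k1,k2,i,d]" using k d c by auto
    show False
    proof (cases "\<pi> k1 < \<pi> k2")
      case True
      have "contains_pattern n \<pi> [1,2,4,3]"
      proof (rule contains_by_list[OF _ pos(2) pos(1)])
        show "\<forall>a<length [1::nat,2,4,3]. \<forall>b<length [1::nat,2,4,3]. \<pi> ([k1,k2,i,d] ! a) < \<pi> ([k1,k2,i,d] ! b) \<longleftrightarrow> [1::nat,2,4,3] ! a < [1,2,4,3] ! b"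
          using k d c True by (simp add: all_less_4)
      qed simp
      with S show False unfolding schroeder_def avoids_def by simp
    next
      case False
      then have F: "\<pi> k2 < \<pi> k1" using ne by simp
      have "contains_pattern n \<pi> [2,1,4,3]"
      proof (rule contains_by_list[OF _ pos(2) pos(1)])
        show "\<forall>a<length [2::nat,1,4,3]. \<forall>b<length [2::nat,1,4,3]. \<pi> ([k1,k2,i,d] ! a) < \<pi> ([k1,k2,i,d] ! b) \<longleftrightarrow> [2::nat,1,4,3] ! a < [2,1,4,3] ! b"
          using k d c F by (simp add: all_less_4)
      qed simp
      with S show False unfolding schroeder_def avoids_def by simp
    qed
  qed
next
  assume R: "\<forall>i j. (i,j) \<in> diagram n \<pi> \<longrightarrow> rank \<pi> (i,j) \<le> 1"
  have key: False if cp: "contains_pattern n \<pi> \<tau>" and tt: "\<tau> = [1,2,4,3] \<or> \<tau> = [2,1,4,3]" for \<tau>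
  proof -
    obtain f where f: "strict_mono_on {0..<length \<tau>} f" "\<forall>a<length \<tau>. f a \<in> {1..n}"
      "\<forall>a<length \<tau>. \<forall>b<length \<tau>. \<pi> (f a) < \<pi> (f b) \<longleftrightarrow> \<tau>!a < \<tau>!b"
      using cp unfolding contains_pattern_def by blast
    have len: "length \<tau> = 4" using tt by auto
    have mono: "f 0 < f 1" "f 1 < f 2" "f 2 < f 3"
      by (rule strict_mono_onD[OF f(1)], use len in simp_all)+
    have inr: "f 0 \<in> {1..n}" "f 1 \<in> {1..n}" "f 2 \<in> {1..n}" "f 3 \<in> {1..n}" using f(2) len by auto
    have i1: "\<pi> (f 0) < \<pi> (f 3) \<longleftrightarrow> \<tau>!0 < \<tau>!3" using f(3)[rule_format, of 0 3] len by simp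
    have i2: "\<pi> (f 1) < \<pi> (f 3) \<longleftrightarrow> \<tau>!1 < \<tau>!3" using f(3)[rule_format, of 1 3] len by simp
    have i3: "\<pi> (f 3) < \<pi> (f 2) \<longleftrightarrow> \<tau>!3 < \<tau>!2" using f(3)[rule_format, of 3 2] len by simp
    have i4: "\<pi> (f 0) < \<pi> (f 1) \<longleftrightarrow> \<tau>!0 < \<tau>!1" using f(3)[rule_format, of 0 1] len by simp
    have i5: "\<pi> (f 1) < \<pi> (f 0) \<longleftrightarrow> \<tau>!1 < \<tau>!0" using f(3)[rule_format, of 1 0] len by simp
    have v: "\<pi> (f 0) < \<pi> (f 3)" "\<pi> (f 1) < \<pi> (f 3)" "\<pi> (f 3) < \<pi> (f 2)" "\<pi> (f 0) \<noteq> \<pi> (f 1)"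
      using i1 i2 i3 i4 i5 tt by auto
    have cell: "(f 2, \<pi> (f 3)) \<in> diagram n \<pi>"
    proof -
      have "inv \<pi> (\<pi> (f 3)) = f 3" using permutes_inverses(2)[OF perm] by simp
      moreover have "\<pi> (f 3) \<in> {1..n}" using p_in[OF perm inr(4)] .
      ultimately show ?thesis unfolding diagram_def using inr(3) v(3) mono by simp
    qed
    have "{f 0, f 1} \<subseteq> {k. 1 \<le> k \<and> k < f 2 \<and> \<pi> k < \<pi> (f 3)}" using inr v mono by auto
    moreover have "finite {k. 1 \<le> k \<and> k < f 2 \<and> \<pi> k < \<pi> (f 3)}" by (rule finite_subset[of _ "{..<f 2}"]) auto
    ultimately have "card {f 0, f 1} \<le> rank \<pi> (f 2, \<pi> (f 3))" unfolding rank_def by (simp add: card_mono)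
    moreover have "card {f 0, f 1} = 2" using mono by simp
    moreover have "rank \<pi> (f 2, \<pi> (f 3)) \<le> 1" using R cell by blast
    ultimately show False by linarith
  qed
  show "schroeder n \<pi>" unfolding schroeder_def avoids_def
  proof (intro conjI notI)
    assume "contains_pattern n \<pi> [1,2,4,3]"
    then show False by (rule key) simp
  next
    assume "contains_pattern n \<pi> [2,1,4,3]"
    then show False by (rule key) simp
  qed
qed

end

definition decr :: "nat \<Rightarrow> (nat \<Rightarrow> nat) \<Rightarrow> bool" where
  "decr n f \<longleftrightarrow> (\<forall>a b. 1 \<le> a \<longrightarrow> a \<le> b \<longrightarrow> b \<le> n \<longrightarrow> f b \<le> f a)"

definition corners :: "nat \<Rightarrow> (nat \<Rightarrow> nat) \<Rightarrow> nat set" where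
  "corners n f = {i. 1 \<le> i \<and> i < n \<and> 1 \<le> f i \<and> f (Suc i) < f i}"

definition cells :: "(nat \<Rightarrow> nat) \<Rightarrow> nat set \<Rightarrow> (nat \<times> nat) set" where
  "cells f S = (\<lambda>i. (i, f i)) ` S"

lemma decr_step:
  assumes "\<And>i. 1 \<le> i \<Longrightarrow> i < n \<Longrightarrow> f (Suc i) \<le> f i"
  shows "decr n f"
  unfolding decr_def
proof (intro allI impI)
  fix a b assume ab: "1 \<le> a" "a \<le> b" "b \<le> n"
  show "f b \<le> f a" using ab
  proof (induction b)
    case 0 then show ?case by simp
  next
    case (Suc b)
    show ?case
    proof (cases "a = Suc b")
      case True then show ?thesis by simp
    next
      case False
      then have "a \<le> b" using Suc.prems by simp
      then have "f b \<le> f a" using Suc.IH Suc.prems by simp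
      moreover have "f (Suc b) \<le> f b" using assms[of b] Suc.prems \<open>a \<le> b\<close> by simp
      ultimately show ?thesis by simp
    qed
  qed
qed

lemma decrD: "decr n f \<Longrightarrow> 1 \<le> a \<Longrightarrow> a \<le> b \<Longrightarrow> b \<le> n \<Longrightarrow> f b \<le> f a"
  unfolding decr_def by blast

lemma next_corner:
  assumes d: "decr n f" and fn: "f n = 0" and i: "1 \<le> i" "i \<le> n" and fi: "1 \<le> f i"
  shows "\<exists>r. r \<in> corners n f \<and> i \<le> r \<and> f r = f i"
  using i fi
proof (induction "n - i" arbitrary: i)
  case 0
  then have "i = n" by simp
  with fn 0 show ?case by simp
next
  case (Suc k)
  have iln: "i < n" using Suc.hyps by simp
  show ?case
  proof (cases "f (Suc i) < f i")
    case True
    then have "i \<in> corners n f" unfolding corners_def using Suc.prems iln by simp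
    then show ?thesis by blast
  next
    case False
    then have eq: "f (Suc i) = f i" using decrD[OF d, of i "Suc i"] Suc.prems iln by simp
    have "\<exists>r. r \<in> corners n f \<and> Suc i \<le> r \<and> f r = f (Suc i)"
      using Suc.hyps(1)[of "Suc i"] Suc.hyps(2) Suc.prems iln eq by simp
    then show ?thesis using eq by fastforce
  qed
qed

lemma corner_inj:
  assumes df: "decr n f" and dg: "decr n g" and f0: "f n = 0" and g0: "g n = 0"
    and eq: "cells f (corners n f) = cells g (corners n g)"
    and i: "1 \<le> i" "i \<le> n"
  shows "f i = g i"
proof -
  have half: "F i \<le> G i"
    if dF: "decr n F" and dG: "decr n G" and F0: "F n = 0"
      and e: "cells F (corners n F) = cells G (corners n G)" for F G
  proof (cases "F i = 0")
    case True then show ?thesis by simp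
  next
    case False
    then obtain r where r: "r \<in> corners n F" "i \<le> r" "F r = F i"
      using next_corner[OF dF F0 i] by fastforce
    have "(r, F r) \<in> cells G (corners n G)" using r(1) e unfolding cells_def by blast
    then have "G r = F r" "r \<in> corners n G" unfolding cells_def by auto
    then have "r \<le> n" unfolding corners_def by simp
    then have "G r \<le> G i" using decrD[OF dG i(1) r(2)] by simp
    with \<open>G r = F r\<close> r(3) show ?thesis by simp
  qed
  show ?thesis using half[OF df dg f0 eq] half[OF dg df g0 eq[symmetric]] by simp
qed

lemma card_ne0: "finite S \<Longrightarrow> x \<in> S \<Longrightarrow> card S \<noteq> 0"
  by (auto simp: card_eq_0_iff)

context
  fixes n :: nat and \<tau> :: "nat \<Rightarrow> nat"
  assumes perm: "\<tau> permutes {1..n}"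
begin

lemma code_lt: assumes i: "i \<in> {1..n}" shows "code \<tau> i < \<tau> i"
proof -
  have "code \<tau> i + card {p \<in> pre \<tau> i. p < \<tau> i} = \<tau> i - 1" by (rule code_alt[OF perm i])
  moreover have "1 \<le> \<tau> i" using p_in[OF perm i] by simp
  ultimately show ?thesis by linarith
qed

lemma rank_mono: "i \<le> i' \<Longrightarrow> j \<le> j' \<Longrightarrow> rank \<tau> (i,j) \<le> rank \<tau> (i',j')"
  unfolding rank_def fst_conv snd_conv
  by (rule card_mono) (rule finite_subset[of _ "{..<i'}"], auto)

lemma diag_sub: "diagram n \<tau> \<subseteq> {1..n} \<times> {1..n}"
  unfolding diagram_def by auto

lemma ess_reach:
  assumes c: "(i,j) \<in> diagram n \<tau>"
  shows "\<exists>a b. (a,b) \<in> ess n \<tau> \<and> i \<le> a \<and> j \<le> b"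
proof -
  define S where "S = {e \<in> diagram n \<tau>. i \<le> fst e \<and> j \<le> snd e}"
  have finS: "finite S" unfolding S_def
    by (rule finite_subset[OF _ finite_cartesian_product[of "{1..n}" "{1..n}"]]) (use diag_sub in auto)
  have neS: "(i,j) \<in> S" unfolding S_def using c by simp
  define m where "m = Max ((\<lambda>e. fst e + snd e) ` S)"
  have "m \<in> (\<lambda>e. fst e + snd e) ` S" unfolding m_def using finS neS by (intro Max_in) auto
  then obtain e where e: "e \<in> S" "fst e + snd e = m" by blast
  have mx: "fst e' + snd e' \<le> m" if "e' \<in> S" for e'
    unfolding m_def using finS that by (intro Max_ge) auto
  obtain a b where ab: "e = (a,b)" by (cases e)
  have d: "(a,b) \<in> diagram n \<tau>" "i \<le> a" "j \<le> b" using e(1) ab unfolding S_def by auto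
  have n1: "(a+1,b) \<notin> diagram n \<tau>"
  proof
    assume "(a+1,b) \<in> diagram n \<tau>"
    then have "(a+1,b) \<in> S" unfolding S_def using d by simp
    from mx[OF this] e(2) ab show False by simp
  qed
  have n2: "(a,b+1) \<notin> diagram n \<tau>"
  proof
    assume "(a,b+1) \<in> diagram n \<tau>"
    then have "(a,b+1) \<in> S" unfolding S_def using d by simp
    from mx[OF this] e(2) ab show False by simp
  qed
  have "(a,b) \<in> ess n \<tau>" unfolding ess_def using d n1 n2 by simp
  then show ?thesis using d by blast
qed

lemma ess0_all0:
  assumes "\<forall>e\<in>ess n \<tau>. rank \<tau> e = 0" and c: "(i,j) \<in> diagram n \<tau>"
  shows "rank \<tau> (i,j) = 0"
proof -
  obtain a b where ab: "(a,b) \<in> ess n \<tau>" "i \<le> a" "j \<le> b" using ess_reach[OF c] by blast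
  have "rank \<tau> (i,j) \<le> rank \<tau> (a,b)" by (rule rank_mono) (use ab in auto)
  with assms(1) ab(1) show ?thesis by simp
qed

lemma row_set_card: "i \<in> {1..n} \<Longrightarrow> card {j. (i,j) \<in> diagram n \<tau>} = code \<tau> i"
  unfolding code_def using diag_iff[OF perm] by simp

lemma dom_row:
  assumes r0: "\<And>i j. (i,j) \<in> diagram n \<tau> \<Longrightarrow> rank \<tau> (i,j) = 0" and i: "i \<in> {1..n}"
  shows "(i,j) \<in> diagram n \<tau> \<longleftrightarrow> 1 \<le> j \<and> j \<le> code \<tau> i"
proof -
  define R where "R = {j. 1 \<le> j \<and> j < \<tau> i \<and> j \<notin> pre \<tau> i}"
  have cR: "card R = code \<tau> i" unfolding R_def code_def by simp
  have finR: "finite R" unfolding R_def by (rule finite_subset[of _ "{..<\<tau> i}"]) auto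
  have Rd: "j' \<in> R \<longleftrightarrow> (i,j') \<in> diagram n \<tau>" for j' unfolding R_def using diag_iff[OF perm] i by auto
  have nopre: "p \<notin> pre \<tau> i" if "j' \<in> R" "p < j'" for j' p
  proof
    assume "p \<in> pre \<tau> i"
    then have "p \<in> {q \<in> pre \<tau> i. q < j'}" using that by simp
    then have "card {q \<in> pre \<tau> i. q < j'} \<noteq> 0" by (intro card_ne0) simp_all
    moreover have "rank \<tau> (i,j') = 0" using r0 that(1) Rd by simp
    moreover have "rank \<tau> (i,j') = card {q \<in> pre \<tau> i. q < j'}" by (rule rank_eq[OF perm])
    ultimately show False by linarith
  qed
  show ?thesis
  proof
    assume "(i,j) \<in> diagram n \<tau>"
    then have jR: "j \<in> R" using Rd by simp
    have "{1..j} \<subseteq> R"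
    proof
      fix j' assume j': "j' \<in> {1..j}"
      show "j' \<in> R"
      proof (cases "j' = j")
        case True then show ?thesis using jR by simp
      next
        case False
        then have "j' < j" using j' by simp
        then show ?thesis using jR nopre[OF jR, of j'] j' unfolding R_def by auto
      qed
    qed
    then have "card {1..j} \<le> card R" using finR by (rule card_mono[rotated])
    then show "1 \<le> j \<and> j \<le> code \<tau> i" using cR jR unfolding R_def by simp
  next
    assume j: "1 \<le> j \<and> j \<le> code \<tau> i"
    show "(i,j) \<in> diagram n \<tau>"
    proof (rule ccontr)
      assume "(i,j) \<notin> diagram n \<tau>"
      then have jn: "j \<notin> R" using Rd by simp
      have "R \<subseteq> {1..<j}"
      proof
        fix r assume rR: "r \<in> R"
        show "r \<in> {1..<j}"
        proof (rule ccontr)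
          assume "r \<notin> {1..<j}"
          then have "j \<le> r" using rR unfolding R_def by auto
          then have "j < \<tau> i" using rR unfolding R_def by simp
          then have "j \<in> pre \<tau> i" using jn j unfolding R_def by simp
          moreover have "j \<noteq> r" using rR \<open>j \<in> pre \<tau> i\<close> unfolding R_def by auto
          ultimately show False using nopre[OF rR, of j] \<open>j \<le> r\<close> by simp
        qed
      qed
      then have "card R \<le> card {1..<j}" by (rule card_mono[rotated]) simp
      moreover have "1 \<le> j" "j \<le> code \<tau> i" using j by auto
      ultimately show False using cR by simp
    qed
  qed
qed

lemma dom_decr:
  assumes r0: "\<And>i j. (i,j) \<in> diagram n \<tau> \<Longrightarrow> rank \<tau> (i,j) = 0"
  shows "decr n (code \<tau>)"
proof (rule decr_step)
  fix i assume i: "1 \<le> i" "i < n"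
  show "code \<tau> (Suc i) \<le> code \<tau> i"
  proof (cases "code \<tau> (Suc i) = 0")
    case True then show ?thesis by simp
  next
    case False
    let ?j = "code \<tau> (Suc i)"
    have c: "(Suc i, ?j) \<in> diagram n \<tau>" using dom_row[OF r0, of "Suc i" ?j] i False by simp
    then have c': "?j < \<tau> (Suc i)" "?j \<notin> pre \<tau> (Suc i)" using diag_iff[OF perm] by auto
    have "rank \<tau> (Suc i, ?j) = 0" using r0 c by simp
    then have nob: "\<not> (\<tau> i < ?j)"
    proof (intro notI)
      assume "rank \<tau> (Suc i, ?j) = 0" "\<tau> i < ?j"
      then have "\<tau> i \<in> {q \<in> pre \<tau> (Suc i). q < ?j}" using pre_Suc[OF i(1)] by simp
      then have "card {q \<in> pre \<tau> (Suc i). q < ?j} \<noteq> 0" by (intro card_ne0) simp_all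
      with \<open>rank \<tau> (Suc i, ?j) = 0\<close> show False using rank_eq[OF perm] by simp
    qed
    have "\<tau> i \<noteq> ?j" using c'(2) pre_Suc[OF i(1)] by simp
    with nob have "?j < \<tau> i" by simp
    moreover have "?j \<notin> pre \<tau> i" using c'(2) pre_Suc[OF i(1)] by simp
    ultimately have "(i, ?j) \<in> diagram n \<tau>" using diag_iff[OF perm] i False by simp
    then show ?thesis using dom_row[OF r0, of i ?j] i by simp
  qed
qed

lemma dec_inv:
  assumes d: "decr n (code \<tau>)" and i: "1 \<le> i" "i \<le> n"
  shows "pre \<tau> (Suc i) \<inter> {1..code \<tau> i} = {}"
  using i
proof (induction i)
  case 0 then show ?case by simp
next
  case (Suc i)
  have gt: "code \<tau> (Suc i) < \<tau> (Suc i)" using code_lt Suc.prems by simp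
  show ?case
  proof (cases "i = 0")
    case True
    then show ?thesis using gt by (simp add: pre_def)
  next
    case False
    then have IH: "pre \<tau> (Suc i) \<inter> {1..code \<tau> i} = {}" using Suc by simp
    have "code \<tau> (Suc i) \<le> code \<tau> i" using decrD[OF d, of i "Suc i"] False Suc.prems by simp
    then show ?thesis using IH gt pre_Suc[of "Suc i" \<tau>] by auto
  qed
qed

lemma dec_row:
  assumes d: "decr n (code \<tau>)" and i: "i \<in> {1..n}"
  shows "(i,j) \<in> diagram n \<tau> \<longleftrightarrow> 1 \<le> j \<and> j \<le> code \<tau> i"
    and "(i,j) \<in> diagram n \<tau> \<Longrightarrow> rank \<tau> (i,j) = 0"
proof -
  have disj: "pre \<tau> i \<inter> {1..code \<tau> i} = {}"
  proof (cases "i = 1")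
    case True then show ?thesis by (simp add: pre_def)
  next
    case False
    then obtain i' where i': "i = Suc i'" "1 \<le> i'" using i by (cases i) auto
    have "pre \<tau> (Suc i') \<inter> {1..code \<tau> i'} = {}" using dec_inv[OF d, of i'] i' i by simp
    moreover have "code \<tau> i \<le> code \<tau> i'" using decrD[OF d, of i' i] i' i by simp
    ultimately show ?thesis using i' by auto
  qed
  define R where "R = {j. 1 \<le> j \<and> j < \<tau> i \<and> j \<notin> pre \<tau> i}"
  have cR: "card R = code \<tau> i" unfolding R_def code_def by simp
  have finR: "finite R" unfolding R_def by (rule finite_subset[of _ "{..<\<tau> i}"]) auto
  have lt: "code \<tau> i < \<tau> i" using code_lt[OF i] .
  have sub: "{1..code \<tau> i} \<subseteq> R" unfolding R_def using disj lt by auto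
  have eqR: "R = {1..code \<tau> i}"
    using card_subset_eq[OF finR sub] cR by simp
  have Rd: "(i,j') \<in> diagram n \<tau> \<longleftrightarrow> j' \<in> R" for j' unfolding R_def using diag_iff[OF perm] i by auto
  show "(i,j) \<in> diagram n \<tau> \<longleftrightarrow> 1 \<le> j \<and> j \<le> code \<tau> i" using Rd eqR by simp
  assume "(i,j) \<in> diagram n \<tau>"
  then have "j \<le> code \<tau> i" using Rd eqR by simp
  then have "{q \<in> pre \<tau> i. q < j} = {}" using disj pre_ge1[OF perm, of i] i by fastforce
  then show "rank \<tau> (i,j) = 0" using rank_eq[OF perm] by simp
qed

lemma ess_young:
  assumes row: "\<And>i j. i \<in> {1..n} \<Longrightarrow> (i,j) \<in> diagram n \<tau> \<longleftrightarrow> 1 \<le> j \<and> j \<le> f i"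
    and d: "decr n f" and fn: "f n = 0"
  shows "ess n \<tau> = cells f (corners n f)"
proof -
  have D: "(i,j) \<in> diagram n \<tau> \<longleftrightarrow> 1 \<le> i \<and> i \<le> n \<and> 1 \<le> j \<and> j \<le> f i" for i j
    using row[of i j] diag_sub by auto
  show ?thesis
  proof (rule set_eqI)
    fix e :: "nat \<times> nat"
    obtain i j where e: "e = (i,j)" by (cases e)
    have "(i,j) \<in> ess n \<tau> \<longleftrightarrow> (i,j) \<in> cells f (corners n f)"
    proof
      assume "(i,j) \<in> ess n \<tau>"
      then have a: "1 \<le> i" "i \<le> n" "1 \<le> j" "j \<le> f i" "\<not> (Suc i \<le> n \<and> j \<le> f (Suc i))" "\<not> (Suc j \<le> f i)"
        unfolding ess_def using D by auto
      have "i \<noteq> n" using a fn by auto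
      then have "i < n" using a by simp
      then have "i \<in> corners n f" "j = f i" unfolding corners_def using a by auto
      then show "(i,j) \<in> cells f (corners n f)" unfolding cells_def by simp
    next
      assume "(i,j) \<in> cells f (corners n f)"
      then have a: "i \<in> corners n f" "j = f i" unfolding cells_def by auto
      then show "(i,j) \<in> ess n \<tau>" unfolding ess_def corners_def using D by auto
    qed
    then show "e \<in> ess n \<tau> \<longleftrightarrow> e \<in> cells f (corners n f)" using e by simp
  qed
qed

end

definition hh :: "nat \<Rightarrow> (nat \<Rightarrow> nat) \<Rightarrow> nat \<Rightarrow> nat" where
  "hh n \<pi> i = (if Am n \<pi> i \<le> code \<pi> i then Suc (code \<pi> i) else code \<pi> i)"

definition lam :: "nat \<Rightarrow> (nat \<Rightarrow> nat) \<Rightarrow> nat \<Rightarrow> nat" where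
  "lam n \<pi> i = max (Am n \<pi> (Suc i) - 1) (code \<pi> (Suc i))"

definition Sch :: "nat \<Rightarrow> (nat \<Rightarrow> nat) \<Rightarrow> bool" where
  "Sch n \<pi> \<longleftrightarrow> (\<forall>i j. (i,j) \<in> diagram n \<pi> \<longrightarrow> rank \<pi> (i,j) \<le> 1)"

lemma card2: "x \<in> S \<Longrightarrow> y \<in> S \<Longrightarrow> x \<noteq> y \<Longrightarrow> finite S \<Longrightarrow> 2 \<le> card S"
proof -
  assume a: "x \<in> S" "y \<in> S" "x \<noteq> y" "finite S"
  have "card {x,y} \<le> card S" using a by (intro card_mono) auto
  then show ?thesis using a(3) by simp
qed

context
  fixes n :: nat and \<pi> :: "nat \<Rightarrow> nat"
  assumes perm: "\<pi> permutes {1..n}"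
begin

lemma rank_below: assumes "j \<le> Am n \<pi> i" shows "rank \<pi> (i,j) = 0"
proof -
  have "{p \<in> pre \<pi> i. p < j} = {}"
  proof (rule equals0I)
    fix p assume "p \<in> {p \<in> pre \<pi> i. p < j}"
    then have "p \<in> pre \<pi> i" "p < j" by auto
    from this(1) have "Am n \<pi> i \<le> p" by (rule Am_le)
    with \<open>p < j\<close> assms show False by simp
  qed
  then show ?thesis using rank_eq[OF perm, of i j] by simp
qed

lemma rank_above_ge1:
  assumes i: "i \<in> {1..n}" and j: "Am n \<pi> i < j" "j \<le> n"
  shows "1 \<le> rank \<pi> (i,j)"
proof -
  have "i \<noteq> 1" using j by (cases "i = 1") auto
  then have A: "Am n \<pi> i \<in> pre \<pi> i" using Am_mem[OF perm] i by simp
  then have "Am n \<pi> i \<in> {p \<in> pre \<pi> i. p < j}" using j by simp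
  then have "card {p \<in> pre \<pi> i. p < j} \<noteq> 0" by (intro card_ne0) simp_all
  moreover have "rank \<pi> (i,j) = card {p \<in> pre \<pi> i. p < j}" by (rule rank_eq[OF perm])
  ultimately show ?thesis by linarith
qed

context
  assumes S: "Sch n \<pi>"
begin

lemma S_rank_le: "(i,j) \<in> diagram n \<pi> \<Longrightarrow> rank \<pi> (i,j) \<le> 1"
  using S unfolding Sch_def by blast

lemma S_row:
  assumes i: "i \<in> {1..n}"
  shows "(i,j) \<in> diagram n \<pi> \<longleftrightarrow> 1 \<le> j \<and> j \<le> hh n \<pi> i \<and> j \<noteq> Am n \<pi> i"
proof -
  obtain A where A_def: "A = Am n \<pi> i" by simp
  obtain c where c_def: "c = code \<pi> i" by simp
  define R where "R = {j. 1 \<le> j \<and> j < \<pi> i \<and> j \<notin> pre \<pi> i}"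
  have cR: "card R = c" unfolding R_def c_def code_def by simp
  have finR: "finite R" unfolding R_def by (rule finite_subset[of _ "{..<\<pi> i}"]) auto
  have Rd: "(i,j') \<in> diagram n \<pi> \<longleftrightarrow> j' \<in> R" for j' unfolding R_def using diag_iff[OF perm, of i j'] i by simp
  have ne: "\<pi> i \<noteq> A" unfolding A_def by (rule pi_ne_Am[OF perm i])
  have goal: "(i,j) \<in> diagram n \<pi> \<longleftrightarrow> 1 \<le> j \<and> j \<le> hh n \<pi> i \<and> j \<noteq> A"
  proof (cases "\<pi> i < A")
    case True
    have cc: "c = \<pi> i - 1" using GLa[OF perm i] True unfolding A_def c_def by simp
    have pi1: "1 \<le> \<pi> i" using p_in[OF perm i] by simp
    have h: "hh n \<pi> i = c"
    proof -
      have "\<not> A \<le> c" using cc True pi1 by linarith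
      then show ?thesis unfolding hh_def A_def c_def by simp
    qed
    have RR: "j' \<in> R \<longleftrightarrow> 1 \<le> j' \<and> j' < \<pi> i" for j'
    proof -
      have "j' < \<pi> i \<Longrightarrow> j' \<notin> pre \<pi> i" using below_Am[of j' n \<pi> i] True unfolding A_def by simp
      then show ?thesis unfolding R_def by blast
    qed
    have "1 \<le> j \<and> j < \<pi> i \<longleftrightarrow> 1 \<le> j \<and> j \<le> c \<and> j \<noteq> A" using cc True pi1 by auto
    then show ?thesis using Rd[of j] RR[of j] h by simp
  next
    case False
    then have lt: "A < \<pi> i" using ne by simp
    have g: "A - 1 \<le> c" "c + 2 \<le> \<pi> i" using GLc[OF perm i] lt unfolding A_def c_def by auto
    have "i \<noteq> 1" using lt p_in[OF perm i] unfolding A_def by auto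
    then have Ain: "A \<in> pre \<pi> i" using Am_mem[OF perm] i unfolding A_def by simp
    have A1: "1 \<le> A" using Ain pre_ge1[OF perm, of i] i by simp
    define T where "T = {j. 1 \<le> j \<and> j \<le> Suc c \<and> j \<noteq> A}"
    have RT: "R \<subseteq> T"
    proof
      fix j assume jR: "j \<in> R"
      have jA: "j \<noteq> A" using jR Ain unfolding R_def by auto
      show "j \<in> T"
      proof (cases "j < A")
        case True
        then have "j \<le> Suc c" using g by linarith
        then show ?thesis using jR jA unfolding T_def R_def by simp
      next
        case False
        then have jgt: "A < j" using jA by simp
        have sub: "{1..j} - {A} \<subseteq> R"
        proof
          fix j' assume j': "j' \<in> {1..j} - {A}"
          show "j' \<in> R"
          proof (cases "j' = j")
            case True then show ?thesis using jR by simp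
          next
            case False
            then have "j' < j" using j' by simp
            have "j' \<notin> pre \<pi> i"
            proof
              assume "j' \<in> pre \<pi> i"
              then have "2 \<le> card {p \<in> pre \<pi> i. p < j}"
                using Ain jgt \<open>j' < j\<close> j' by (intro card2[of A _ j']) auto
              moreover have "rank \<pi> (i,j) \<le> 1" using S_rank_le Rd jR by simp
              moreover have "rank \<pi> (i,j) = card {p \<in> pre \<pi> i. p < j}" by (rule rank_eq[OF perm])
              ultimately show False by linarith
            qed
            moreover have "j' < \<pi> i" using jR \<open>j' < j\<close> unfolding R_def by simp
            ultimately show ?thesis using j' unfolding R_def by simp
          qed
        qed
        have "card ({1..j} - {A}) \<le> card R" using sub finR by (rule card_mono[rotated])
        moreover have "card ({1..j} - {A}) = j - 1" using jgt A1 by simp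
        ultimately have "j \<le> Suc c" using cR by linarith
        then show ?thesis using jR jA unfolding T_def R_def by simp
      qed
    qed
    have cT: "card T = c"
    proof -
      have "T = {1..Suc c} - {A}" unfolding T_def by auto
      moreover have "A \<in> {1..Suc c}" using A1 g by simp
      ultimately show ?thesis by simp
    qed
    have finT: "finite T" unfolding T_def by (rule finite_subset[of _ "{..Suc c}"]) auto
    have RT': "R = T" using card_subset_eq[OF finT RT] cR cT by simp
    have jT: "(i,j) \<in> diagram n \<pi> \<longleftrightarrow> 1 \<le> j \<and> j \<le> Suc c \<and> j \<noteq> A"
      using Rd[of j] RT' unfolding T_def by simp
    show ?thesis
    proof (cases "A \<le> c")
      case True
      then have "hh n \<pi> i = Suc c" unfolding hh_def A_def c_def by simp
      then show ?thesis using jT by simp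
    next
      case False
      then have AS: "A = Suc c" using g by simp
      moreover have "hh n \<pi> i = c" unfolding hh_def using False unfolding A_def c_def by simp
      ultimately show ?thesis using jT by auto
    qed
  qed
  then show ?thesis unfolding A_def .
qed

lemma S_cell_not_pre:
  assumes i: "i \<in> {1..n}" and j: "1 \<le> j" "j \<le> hh n \<pi> i" "j \<noteq> Am n \<pi> i"
  shows "j \<notin> pre \<pi> i"
  using S_row[OF i, of j] j diag_iff[OF perm] by simp

lemma S_rank_above:
  assumes i: "i \<in> {1..n}" and c: "(i,j) \<in> diagram n \<pi>" and j: "Am n \<pi> i < j"
  shows "rank \<pi> (i,j) = 1"
proof -
  have "j \<le> n" using c unfolding diagram_def by simp
  then show ?thesis using rank_above_ge1[OF i j] S_rank_le[OF c] by simp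
qed

end
end

context
  fixes n :: nat and \<pi> :: "nat \<Rightarrow> nat"
  assumes perm: "\<pi> permutes {1..n}" and S: "Sch n \<pi>"
begin

lemma Drow: "(i,j) \<in> diagram n \<pi> \<longleftrightarrow> 1 \<le> i \<and> i \<le> n \<and> 1 \<le> j \<and> j \<le> hh n \<pi> i \<and> j \<noteq> Am n \<pi> i"
proof (cases "i \<in> {1..n}")
  case True then show ?thesis using S_row[OF perm S True] by auto
next
  case False then show ?thesis unfolding diagram_def by auto
qed

lemma hh_ge: "code \<pi> i \<le> hh n \<pi> i" "hh n \<pi> i \<le> Suc (code \<pi> i)"
  unfolding hh_def by auto

lemma LemmaX:
  assumes k: "1 \<le> k" "k \<le> n" and c: "code \<pi> k < Am n \<pi> k - 1"
  shows "code \<pi> (Suc k) < Am n \<pi> k - 1"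
proof (cases "k = n")
  case True
  then show ?thesis using code_last[OF perm] c by simp
next
  case False
  then have kn: "Suc k \<le> n" using k by simp
  show ?thesis
  proof (cases "k = 1")
    case True
    then have "code \<pi> (Suc k) \<le> n - Suc k" using code_le[OF perm, of "Suc k"] kn by simp
    then show ?thesis using True kn by simp
  next
    case False
    then have k2: "2 \<le> k" using k by simp
    have ki: "k \<in> {1..n}" using k by simp
    have g: "\<pi> k = Suc (code \<pi> k)" "Am n \<pi> (Suc k) = \<pi> k" using GL1[OF perm ki c] by auto
    have Ak: "Am n \<pi> k \<in> pre \<pi> k" using Am_mem[OF perm k2] k by simp
    then have Ak': "Am n \<pi> k \<in> pre \<pi> (Suc k)" using pre_Suc[of k \<pi>] k by simp
    have A1: "1 \<le> Am n \<pi> k" using Am_ge1[OF perm, of k] k by simp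
    show ?thesis
    proof (rule ccontr)
      assume "\<not> code \<pi> (Suc k) < Am n \<pi> k - 1"
      then have ge: "Am n \<pi> k - 1 \<le> code \<pi> (Suc k)" by simp
      have "Am n \<pi> (Suc k) \<le> code \<pi> (Suc k)" using g c ge by simp
      then have h: "hh n \<pi> (Suc k) = Suc (code \<pi> (Suc k))" unfolding hh_def by simp
      have "Am n \<pi> k \<notin> pre \<pi> (Suc k)"
      proof (rule S_cell_not_pre[OF perm S])
        show "Suc k \<in> {1..n}" using kn by simp
        show "1 \<le> Am n \<pi> k" by (rule A1)
        show "Am n \<pi> k \<le> hh n \<pi> (Suc k)" using h ge by simp
        show "Am n \<pi> k \<noteq> Am n \<pi> (Suc k)" using g c by simp
      qed
      with Ak' show False by simp
    qed
  qed
qed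

lemma lam_last: "lam n \<pi> n = 0"
  unfolding lam_def using Am_last[OF perm] code_last[OF perm] by simp

lemma lam_bound: assumes i: "1 \<le> i" "i \<le> n" shows "lam n \<pi> i \<le> n - i"
proof -
  have c: "code \<pi> (Suc i) \<le> n - i"
  proof (cases "i = n")
    case True then show ?thesis using code_last[OF perm] by simp
  next
    case False then show ?thesis using code_le[OF perm, of "Suc i"] i by simp
  qed
  define A where "A = Am n \<pi> (Suc i)"
  have sub: "pre \<pi> (Suc i) \<subseteq> {A..n}"
  proof
    fix x assume x: "x \<in> pre \<pi> (Suc i)"
    then have "A \<le> x" unfolding A_def by (rule Am_le)
    moreover have "x \<le> n" using pre_sub[OF perm, of "Suc i"] i x by auto
    ultimately show "x \<in> {A..n}" by simp
  qed
  have "card (pre \<pi> (Suc i)) = i" using card_pre[OF perm, of "Suc i"] by simp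
  moreover have "card (pre \<pi> (Suc i)) \<le> card {A..n}" using sub by (rule card_mono[rotated]) simp
  ultimately have "i \<le> Suc n - A" by simp
  moreover have "A \<le> Suc n" unfolding A_def by (rule Am_le_Suc)
  ultimately have "A - 1 \<le> n - i" by linarith
  then show ?thesis using c unfolding lam_def A_def by simp
qed

lemma lam_decr: "decr n (lam n \<pi>)"
proof (rule decr_step)
  fix i assume i: "1 \<le> i" "i < n"
  define k where "k = Suc i"
  have k: "2 \<le> k" "k \<le> n" using i unfolding k_def by auto
  have ki: "k \<in> {1..n}" using k by simp
  have A: "Am n \<pi> (Suc k) \<le> Am n \<pi> k" using Am_Suc[of k n \<pi>] k by simp
  have C: "code \<pi> (Suc k) \<le> max (Am n \<pi> k - 1) (code \<pi> k)"
  proof (cases "code \<pi> k < Am n \<pi> k - 1")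
    case True
    then show ?thesis using LemmaX[of k] k by simp
  next
    case False
    then have ge: "Am n \<pi> k - 1 \<le> code \<pi> k" by simp
    have g: "Am n \<pi> k < \<pi> k" "Am n \<pi> (Suc k) = Am n \<pi> k" using GL2[OF perm ki ge] by auto
    show ?thesis
    proof (rule ccontr)
      assume "\<not> ?thesis"
      then have gt: "code \<pi> k < code \<pi> (Suc k)" "Am n \<pi> k - 1 < code \<pi> (Suc k)" by auto
      have kn: "k < n"
      proof (rule ccontr)
        assume "\<not> k < n" then have "k = n" using k by simp
        then show False using gt code_last[OF perm] by simp
      qed
      have kn': "Suc k \<in> {1..n}" using kn by simp
      have h: "hh n \<pi> (Suc k) = Suc (code \<pi> (Suc k))" unfolding hh_def using gt g by simp
      have A1: "1 \<le> Am n \<pi> k" using Am_ge1[OF perm, of k] k by simp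
      have pik: "Suc (code \<pi> (Suc k)) < \<pi> k"
      proof (rule ccontr)
        assume "\<not> Suc (code \<pi> (Suc k)) < \<pi> k"
        then have le: "\<pi> k \<le> hh n \<pi> (Suc k)" using h by simp
        have "\<pi> k \<notin> pre \<pi> (Suc k)"
          using S_cell_not_pre[OF perm S kn' _ le] g A1 by simp
        moreover have "\<pi> k \<in> pre \<pi> (Suc k)" using pre_Suc[of k \<pi>] k by simp
        ultimately show False by simp
      qed
      define T where "T = {1..Suc (code \<pi> (Suc k))} - {Am n \<pi> k}"
      have TR: "T \<subseteq> {j. 1 \<le> j \<and> j < \<pi> k \<and> j \<notin> pre \<pi> k}"
      proof
        fix j assume j: "j \<in> T"
        then have j1: "1 \<le> j" "j \<le> hh n \<pi> (Suc k)" "j \<noteq> Am n \<pi> (Suc k)" unfolding T_def using h g by auto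
        have "j \<notin> pre \<pi> (Suc k)" by (rule S_cell_not_pre[OF perm S kn' j1])
        then have "j \<notin> pre \<pi> k" using pre_mono[of k "Suc k" \<pi>] by auto
        moreover have "j < \<pi> k" using j pik unfolding T_def by simp
        ultimately show "j \<in> {j. 1 \<le> j \<and> j < \<pi> k \<and> j \<notin> pre \<pi> k}" using j1 by simp
      qed
      have "card T \<le> code \<pi> k" unfolding code_def using TR
        by (rule card_mono[rotated]) (rule finite_subset[of _ "{..<\<pi> k}"], auto)
      moreover have "card T = code \<pi> (Suc k)"
      proof -
        have "Am n \<pi> k \<in> {1..Suc (code \<pi> (Suc k))}" using A1 gt by simp
        then show ?thesis unfolding T_def by simp
      qed
      ultimately show False using gt by simp
    qed
  qed
  show "lam n \<pi> (Suc i) \<le> lam n \<pi> i"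
    unfolding lam_def using A C unfolding k_def[symmetric] by simp
qed

end

context
  fixes n :: nat and \<pi> :: "nat \<Rightarrow> nat"
  assumes perm: "\<pi> permutes {1..n}" and S: "Sch n \<pi>"
begin

lemma ess_iff: "(i,j) \<in> ess n \<pi> \<longleftrightarrow> (i,j) \<in> diagram n \<pi> \<and> (Suc i,j) \<notin> diagram n \<pi> \<and> (i,Suc j) \<notin> diagram n \<pi>"
  unfolding ess_def by simp

lemma E0:
  assumes e: "(i,j) \<in> ess n \<pi>" and r: "rank \<pi> (i,j) \<noteq> 1"
  shows "i \<in> corners n (lam n \<pi>) \<and> j = lam n \<pi> i"
proof -
  have D: "1 \<le> i" "i \<le> n" "1 \<le> j" "j \<le> hh n \<pi> i" "j \<noteq> Am n \<pi> i"
    using e ess_iff Drow[OF perm S] by auto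
  have n1: "\<not> (Suc i \<le> n \<and> j \<le> hh n \<pi> (Suc i) \<and> j \<noteq> Am n \<pi> (Suc i))"
    using e ess_iff Drow[OF perm S] D by auto
  have n2: "\<not> (Suc j \<le> hh n \<pi> i \<and> Suc j \<noteq> Am n \<pi> i)"
    using e ess_iff Drow[OF perm S] D by auto
  have ii: "i \<in> {1..n}" using D by simp
  have jA: "j < Am n \<pi> i"
  proof (rule ccontr)
    assume "\<not> j < Am n \<pi> i"
    then have "Am n \<pi> i < j" using D by simp
    then have "rank \<pi> (i,j) = 1" using S_rank_above[OF perm S ii] e ess_iff by simp
    with r show False by simp
  qed
  define M where "M = Am n \<pi> (Suc i) - 1"
  have M: "M = min (Am n \<pi> i - 1) (code \<pi> i)" unfolding M_def by (rule GL3[OF perm ii])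
  have jM: "j = M"
  proof (cases "Suc j = Am n \<pi> i")
    case True
    have "Am n \<pi> i - 1 \<le> code \<pi> i"
    proof (cases "Am n \<pi> i \<le> code \<pi> i")
      case True then show ?thesis by simp
    next
      case False then have "hh n \<pi> i = code \<pi> i" unfolding hh_def by simp
      then show ?thesis using D(4) True by simp
    qed
    then show ?thesis using M True by simp
  next
    case False
    then have "hh n \<pi> i < Suc j" using n2 by simp
    then have jh: "j = hh n \<pi> i" using D by simp
    have "\<not> Am n \<pi> i \<le> code \<pi> i"
    proof
      assume "Am n \<pi> i \<le> code \<pi> i"
      then have "hh n \<pi> i = Suc (code \<pi> i)" unfolding hh_def by simp
      then show False using jh jA \<open>Am n \<pi> i \<le> code \<pi> i\<close> by simp
    qed
    then have "hh n \<pi> i = code \<pi> i" unfolding hh_def by simp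
    then show ?thesis using M jh jA by simp
  qed
  have cM: "code \<pi> (Suc i) < M"
  proof (cases "i = n")
    case True then show ?thesis using code_last[OF perm] jM D by simp
  next
    case False
    have "Am n \<pi> (Suc i) \<ge> 1" using Am_ge1[OF perm, of "Suc i"] D by simp
    then have "j \<noteq> Am n \<pi> (Suc i)" using jM M_def by simp
    then have "hh n \<pi> (Suc i) < j" using n1 False D by simp
    then show ?thesis using hh_ge(1)[OF perm S, of "Suc i"] jM by simp
  qed
  have lam: "lam n \<pi> i = j" unfolding lam_def using cM jM M_def by simp
  have iln: "i < n"
  proof (rule ccontr)
    assume "\<not> i < n" then have "i = n" using D by simp
    then have "M = 0" using Am_last[OF perm] M_def by simp
    then show False using jM D by simp
  qed
  have l1: "lam n \<pi> (Suc i) < lam n \<pi> i"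
  proof -
    have si: "Suc i \<in> {1..n}" using iln by simp
    have a: "Am n \<pi> (Suc (Suc i)) - 1 = code \<pi> (Suc i)"
      using GL3[OF perm si] cM M_def by simp
    have b: "code \<pi> (Suc (Suc i)) < M"
      using LemmaX[OF perm S, of "Suc i"] cM M_def iln by simp
    show ?thesis unfolding lam_def[of n \<pi> "Suc i"] using a b cM lam jM by simp
  qed
  show ?thesis unfolding corners_def using D iln lam l1 by simp
qed

lemma E1:
  assumes e: "(i,j) \<in> ess n \<pi>" and r: "rank \<pi> (i,j) = 1"
  shows "i - 1 \<in> corners n (lam n \<pi>) \<and> j - 1 = lam n \<pi> (i - 1)"
proof -
  have D: "1 \<le> i" "i \<le> n" "1 \<le> j" "j \<le> hh n \<pi> i" "j \<noteq> Am n \<pi> i"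
    using e ess_iff Drow[OF perm S] by auto
  have n1: "\<not> (Suc i \<le> n \<and> j \<le> hh n \<pi> (Suc i) \<and> j \<noteq> Am n \<pi> (Suc i))"
    using e ess_iff Drow[OF perm S] D by auto
  have n2: "\<not> (Suc j \<le> hh n \<pi> i \<and> Suc j \<noteq> Am n \<pi> i)"
    using e ess_iff Drow[OF perm S] D by auto
  have ii: "i \<in> {1..n}" using D by simp
  have jA: "Am n \<pi> i < j"
  proof (rule ccontr)
    assume "\<not> Am n \<pi> i < j"
    then have "rank \<pi> (i,j) = 0" using rank_below[OF perm] by simp
    with r show False by simp
  qed
  have jh: "j = hh n \<pi> i" using n2 jA D by simp
  have Ac: "Am n \<pi> i \<le> code \<pi> i"
  proof (rule ccontr)
    assume na: "\<not> Am n \<pi> i \<le> code \<pi> i"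
    then have "hh n \<pi> i = code \<pi> i" unfolding hh_def by simp
    moreover have "Am n \<pi> i < \<pi> i" using jA e ess_iff diag_iff[OF perm] by force
    then have "Am n \<pi> i - 1 \<le> code \<pi> i" using GLc(1)[OF perm ii] by simp
    ultimately show False using jh jA na by simp
  qed
  have jc: "j = Suc (code \<pi> i)" using jh Ac unfolding hh_def by simp
  have A1: "1 \<le> Am n \<pi> i" using Am_ge1[OF perm, of i] D by simp
  have i2: "i \<noteq> 1"
  proof
    assume "i = 1"
    then have "code \<pi> i \<le> n - 1" using code_le[OF perm ii] by simp
    with Ac \<open>i = 1\<close> show False by simp
  qed
  have iln: "i < n"
  proof (rule ccontr)
    assume "\<not> i < n" then have "i = n" using D by simp
    then have "code \<pi> i = 0" using code_le[OF perm ii] by simp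
    with Ac A1 show False by simp
  qed
  have AS: "Am n \<pi> (Suc i) = Am n \<pi> i" using GL2(2)[OF perm ii] Ac by simp
  have cc: "code \<pi> (Suc i) < code \<pi> i"
  proof (rule ccontr)
    assume na: "\<not> ?thesis"
    then have "Am n \<pi> (Suc i) \<le> code \<pi> (Suc i)" using AS Ac by simp
    then have "hh n \<pi> (Suc i) = Suc (code \<pi> (Suc i))" unfolding hh_def by simp
    then have "j \<le> hh n \<pi> (Suc i)" using jc na by simp
    moreover have "j \<noteq> Am n \<pi> (Suc i)" using AS jc Ac by simp
    ultimately show False using n1 iln by simp
  qed
  obtain i' where i': "i = Suc i'" "1 \<le> i'" using D i2 by (cases i) auto
  have lam1: "lam n \<pi> i' = code \<pi> i" unfolding lam_def using i' Ac by simp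
  have lam2: "lam n \<pi> i < code \<pi> i" unfolding lam_def using AS Ac cc by simp
  have "i' \<in> corners n (lam n \<pi>)" unfolding corners_def using i' iln lam1 lam2 Ac A1 by simp
  then show ?thesis using i' lam1 jc by simp
qed

lemma Ccorner:
  assumes ic: "i \<in> corners n (lam n \<pi>)"
  shows "(i, lam n \<pi> i) \<in> ess_star n \<pi>"
proof -
  have C: "1 \<le> i" "i < n" "1 \<le> lam n \<pi> i" "lam n \<pi> (Suc i) < lam n \<pi> i"
    using ic unfolding corners_def by auto
  define k where "k = Suc i"
  have k: "k \<in> {1..n}" "2 \<le> k" using C unfolding k_def by auto
  have ii: "i \<in> {1..n}" using C by simp
  define M where "M = Am n \<pi> k - 1"
  have lamM: "lam n \<pi> i = max M (code \<pi> k)" unfolding lam_def M_def k_def by simp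
  consider (lt) "code \<pi> k < M" | (eq) "code \<pi> k = M" | (gt) "M < code \<pi> k" by linarith
  then show ?thesis
  proof cases
    case lt
    have Mmin: "M = min (Am n \<pi> i - 1) (code \<pi> i)" unfolding M_def k_def by (rule GL3[OF perm ii])
    have lM: "lam n \<pi> i = M" using lamM lt by simp
    have M1: "1 \<le> M" using C lM by simp
    have "M \<le> Am n \<pi> i - 1" using Mmin by simp
    then have Ai: "M < Am n \<pi> i" using M1 by linarith
    have d1: "(i, M) \<in> diagram n \<pi>"
      unfolding Drow[OF perm S] using C M1 Ai Mmin hh_ge[OF perm S, of i] by simp
    have d2: "(i, Suc M) \<notin> diagram n \<pi>"
    proof (cases "Suc M = Am n \<pi> i")
      case True then show ?thesis unfolding Drow[OF perm S] by simp
    next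
      case False
      have "1 \<le> Am n \<pi> i" using Am_ge1[OF perm, of i] C by simp
      then have "M = code \<pi> i" "code \<pi> i < Am n \<pi> i - 1" using Mmin False by (auto simp: min_def split: if_splits)
      then have "hh n \<pi> i = code \<pi> i" unfolding hh_def by simp
      then show ?thesis unfolding Drow[OF perm S] using \<open>M = code \<pi> i\<close> by simp
    qed
    have d3: "(Suc i, M) \<notin> diagram n \<pi>"
    proof -
      have "\<not> Am n \<pi> k \<le> code \<pi> k" using lt M_def by simp
      then have "hh n \<pi> k = code \<pi> k" unfolding hh_def by simp
      then show ?thesis unfolding Drow[OF perm S] using lt k_def by simp
    qed
    have "(i, M) \<in> ess n \<pi>" using d1 d2 d3 ess_iff by simp
    moreover have "rank \<pi> (i, M) = 0" using rank_below[OF perm] Ai by simp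
    ultimately show ?thesis unfolding ess_star_def using lM by simp
  next
    case eq
    have "Am n \<pi> (Suc k) - 1 = min (Am n \<pi> k - 1) (code \<pi> k)" by (rule GL3[OF perm k(1)])
    then have "M \<le> lam n \<pi> (Suc i)" unfolding lam_def k_def[symmetric] using eq M_def by simp
    then show ?thesis using C lamM eq by simp
  next
    case gt
    have lc: "lam n \<pi> i = code \<pi> k" using lamM gt by simp
    have Ak: "Am n \<pi> k \<le> code \<pi> k" using gt M_def by simp
    have hk: "hh n \<pi> k = Suc (code \<pi> k)" unfolding hh_def using Ak by simp
    have d1: "(k, Suc (code \<pi> k)) \<in> diagram n \<pi>"
      unfolding Drow[OF perm S] using k hk Ak by simp
    have d2: "(k, Suc (Suc (code \<pi> k))) \<notin> diagram n \<pi>" unfolding Drow[OF perm S] using hk by simp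
    have d3: "(Suc k, Suc (code \<pi> k)) \<notin> diagram n \<pi>"
    proof (cases "k = n")
      case True then show ?thesis unfolding Drow[OF perm S] by simp
    next
      case False
      have AS: "Am n \<pi> (Suc k) = Am n \<pi> k" using GL2(2)[OF perm k(1)] Ak by simp
      have "lam n \<pi> (Suc i) = max (Am n \<pi> (Suc k) - 1) (code \<pi> (Suc k))" unfolding lam_def k_def by simp
      then have "code \<pi> (Suc k) < code \<pi> k" using C(4) lc by simp
      then have "hh n \<pi> (Suc k) \<le> code \<pi> k" unfolding hh_def by auto
      then show ?thesis unfolding Drow[OF perm S] by simp
    qed
    have ess1: "(k, Suc (code \<pi> k)) \<in> ess n \<pi>" using d1 d2 d3 ess_iff by simp
    have r1: "rank \<pi> (k, Suc (code \<pi> k)) = 1"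
      using S_rank_above[OF perm S k(1) d1] Ak by simp
    have "(i, lam n \<pi> i) = (\<lambda>(a,b). (a - 1, b - 1)) (k, Suc (code \<pi> k))" using lc k_def by simp
    then show ?thesis unfolding ess_star_def using ess1 r1 by blast
  qed
qed

lemma S_ess_star: "ess_star n \<pi> = cells (lam n \<pi>) (corners n (lam n \<pi>))"
proof (rule set_eqI)
  fix e :: "nat \<times> nat"
  show "e \<in> ess_star n \<pi> \<longleftrightarrow> e \<in> cells (lam n \<pi>) (corners n (lam n \<pi>))"
  proof
    assume "e \<in> ess_star n \<pi>"
    then consider (a) "e \<in> ess n \<pi>" "rank \<pi> e \<noteq> 1"
      | (b) e' where "e' \<in> ess n \<pi>" "rank \<pi> e' = 1" "e = (\<lambda>(i,j). (i-1, j-1)) e'"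
      unfolding ess_star_def by blast
    then show "e \<in> cells (lam n \<pi>) (corners n (lam n \<pi>))"
    proof cases
      case a
      obtain i j where ij: "e = (i,j)" by (cases e)
      then show ?thesis using E0[of i j] a unfolding cells_def by auto
    next
      case b
      obtain i j where ij: "e' = (i,j)" by (cases e')
      then show ?thesis using E1[of i j] b unfolding cells_def by force
    qed
  next
    assume "e \<in> cells (lam n \<pi>) (corners n (lam n \<pi>))"
    then obtain i where "i \<in> corners n (lam n \<pi>)" "e = (i, lam n \<pi> i)" unfolding cells_def by blast
    then show "e \<in> ess_star n \<pi>" using Ccorner by simp
  qed
qed

end

lemma decr_cong: "decr n f \<Longrightarrow> (\<And>i. 1 \<le> i \<Longrightarrow> i \<le> n \<Longrightarrow> g i = f i) \<Longrightarrow> decr n g"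
  unfolding decr_def by (metis le_trans)

lemma corners_cong: "(\<And>i. 1 \<le> i \<Longrightarrow> i \<le> n \<Longrightarrow> g i = f i) \<Longrightarrow> cells g (corners n g) = cells f (corners n f)"
proof -
  assume eq: "\<And>i. 1 \<le> i \<Longrightarrow> i \<le> n \<Longrightarrow> g i = f i"
  have c: "corners n g = corners n f"
  proof (rule set_eqI)
    fix i show "i \<in> corners n g \<longleftrightarrow> i \<in> corners n f"
    proof (cases "1 \<le> i \<and> i < n")
      case True
      then have "g i = f i" "g (Suc i) = f (Suc i)" using eq by auto
      then show ?thesis unfolding corners_def by simp
    next
      case False then show ?thesis unfolding corners_def by auto
    qed
  qed
  show ?thesis unfolding cells_def c
  proof (rule image_cong)
    fix i assume "i \<in> corners n f"
    then have "1 \<le> i" "i \<le> n" unfolding corners_def by auto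
    then show "(i, g i) = (i, f i)" using eq by simp
  qed simp
qed

lemma code_n0: "\<tau> permutes {1..n} \<Longrightarrow> code \<tau> n = 0"
proof (cases "n = 0")
  case True
  assume p: "\<tau> permutes {1..n}"
  have "\<tau> 0 = 0" using p_out[OF p] True by simp
  then show ?thesis using True unfolding code_def by simp
next
  case False
  assume p: "\<tau> permutes {1..n}"
  then show ?thesis using code_le[OF p, of n] False by simp
qed

lemma dominant_ess:
  assumes p: "\<tau> permutes {1..n}" and r0: "\<And>i j. (i,j) \<in> diagram n \<tau> \<Longrightarrow> rank \<tau> (i,j) = 0"
  shows "ess n \<tau> = cells (code \<tau>) (corners n (code \<tau>))" "decr n (code \<tau>)"
proof -
  show d: "decr n (code \<tau>)" by (rule dom_decr[OF p r0])
  show "ess n \<tau> = cells (code \<tau>) (corners n (code \<tau>))"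
    by (rule ess_young[OF p _ d code_n0[OF p]]) (rule dom_row[OF p r0])
qed

lemma phi_char:
  assumes p: "\<pi> permutes {1..n}" and S: "Sch n \<pi>"
    and s: "\<sigma> permutes {1..n}" and sr0: "\<And>i j. (i,j) \<in> diagram n \<sigma> \<Longrightarrow> rank \<sigma> (i,j) = 0"
  shows "phi n \<pi> = \<sigma> \<longleftrightarrow> (\<forall>i\<in>{1..n}. code \<sigma> i = lam n \<pi> i)"
proof -
  obtain \<tau>0 where t0: "\<tau>0 permutes {1..n}" "\<forall>i\<in>{1..n}. code \<tau>0 i = lam n \<pi> i"
    using code_surj[of n "lam n \<pi>"] lam_bound[OF p S] by auto
  have dl: "decr n (lam n \<pi>)" by (rule lam_decr[OF p S])
  have ln: "lam n \<pi> n = 0" by (rule lam_last[OF p S])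
  have d0: "decr n (code \<tau>0)" by (rule decr_cong[OF dl]) (use t0 in auto)
  have ess_lam: "ess_star n \<pi> = cells (lam n \<pi>) (corners n (lam n \<pi>))" by (rule S_ess_star[OF p S])
  define P where "P = (\<lambda>\<sigma>. \<sigma> permutes {1..n} \<and> ess n \<sigma> = ess_star n \<pi> \<and> (\<forall>e\<in>ess n \<sigma>. rank \<sigma> e = 0))"
  have P0: "P \<tau>0"
  proof -
    have row: "\<And>i j. i \<in> {1..n} \<Longrightarrow> (i,j) \<in> diagram n \<tau>0 \<longleftrightarrow> 1 \<le> j \<and> j \<le> code \<tau>0 i"
      using dec_row(1)[OF t0(1) d0] by simp
    have e: "ess n \<tau>0 = cells (code \<tau>0) (corners n (code \<tau>0))"
      by (rule ess_young[OF t0(1) row d0 code_n0[OF t0(1)]])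
    also have "\<dots> = cells (lam n \<pi>) (corners n (lam n \<pi>))" by (rule corners_cong) (use t0 in auto)
    finally have e2: "ess n \<tau>0 = ess_star n \<pi>" using ess_lam by simp
    have "\<forall>e\<in>ess n \<tau>0. rank \<tau>0 e = 0"
    proof
      fix e assume "e \<in> ess n \<tau>0"
      moreover obtain i j where ij: "e = (i,j)" by (cases e)
      ultimately have "(i,j) \<in> diagram n \<tau>0" unfolding ess_def by simp
      moreover have "i \<in> {1..n}" using calculation unfolding diagram_def by simp
      ultimately show "rank \<tau>0 e = 0" using dec_row(2)[OF t0(1) d0] ij by simp
    qed
    then show ?thesis unfolding P_def using t0(1) e2 by simp
  qed
  have uniq: "\<tau> = \<tau>0" if Pt: "P \<tau>" for \<tau>
  proof -
    have tp: "\<tau> permutes {1..n}" using Pt unfolding P_def by simp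
    have r0: "\<And>i j. (i,j) \<in> diagram n \<tau> \<Longrightarrow> rank \<tau> (i,j) = 0"
      using ess0_all0[OF tp] Pt unfolding P_def by blast
    have de: "ess n \<tau> = cells (code \<tau>) (corners n (code \<tau>))" "decr n (code \<tau>)"
      using dominant_ess[OF tp r0] by auto
    have "cells (code \<tau>) (corners n (code \<tau>)) = cells (lam n \<pi>) (corners n (lam n \<pi>))"
      using de(1) Pt ess_lam unfolding P_def by simp
    then have "\<And>i. 1 \<le> i \<Longrightarrow> i \<le> n \<Longrightarrow> code \<tau> i = lam n \<pi> i"
      using corner_inj[OF de(2) dl code_n0[OF tp] ln] by blast
    then show "\<tau> = \<tau>0" using t0(2) by (intro code_inj[OF tp t0(1)]) auto
  qed
  have phi0: "phi n \<pi> = \<tau>0" unfolding phi_def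
    using P0 uniq unfolding P_def by (intro the_equality) blast+
  show ?thesis
  proof
    assume "phi n \<pi> = \<sigma>"
    then have "\<sigma> = \<tau>0" using phi0 by simp
    then show "\<forall>i\<in>{1..n}. code \<sigma> i = lam n \<pi> i" using t0 by simp
  next
    assume "\<forall>i\<in>{1..n}. code \<sigma> i = lam n \<pi> i"
    then have "\<sigma> = \<tau>0" using t0(2) by (intro code_inj[OF s t0(1)]) auto
    then show "phi n \<pi> = \<sigma>" using phi0 by simp
  qed
qed


locale seqs =
  fixes n :: nat and L :: "nat \<Rightarrow> nat"
  assumes dL: "decr n L" and Ln: "L n = 0" and Lb: "\<And>i. 1 \<le> i \<Longrightarrow> i \<le> n \<Longrightarrow> L i \<le> n - i"
begin

definition Cor where "Cor = corners n L"
definition Bd where "Bd = {i \<in> Cor. n \<le> i + L i}"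
definition Inn where "Inn = {i \<in> Cor. i + L i < n}"

definition nx :: "nat set \<Rightarrow> nat \<Rightarrow> nat" where
  "nx E k = (LEAST e. k \<le> e \<and> (e \<in> E \<or> e = n))"

definition Ms :: "nat set \<Rightarrow> nat \<Rightarrow> nat" where
  "Ms E k = L (nx E k)"

definition cE :: "nat set \<Rightarrow> nat \<Rightarrow> nat" where
  "cE E k = (if k \<le> 1 then Ms E 1 else if Ms E (k - 1) < L (k - 1) then L (k - 1) else Ms E k)"

lemma Cor_sub: "i \<in> Cor \<Longrightarrow> 1 \<le> i \<and> i < n \<and> 1 \<le> L i \<and> L (Suc i) < L i"
  unfolding Cor_def corners_def by simp

lemma Ldec: "1 \<le> a \<Longrightarrow> a \<le> b \<Longrightarrow> b \<le> n \<Longrightarrow> L b \<le> L a"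
  by (rule decrD[OF dL])

lemma nx_props: assumes "k \<le> n" shows "k \<le> nx E k" "nx E k \<le> n" "nx E k \<in> E \<or> nx E k = n"
proof -
  have ex: "k \<le> n \<and> (n \<in> E \<or> n = n)" using assms by simp
  have P: "k \<le> nx E k \<and> (nx E k \<in> E \<or> nx E k = n)" unfolding nx_def by (rule LeastI[of _ n]) (use ex in simp)
  then show "k \<le> nx E k" "nx E k \<in> E \<or> nx E k = n" by auto
  show "nx E k \<le> n" unfolding nx_def by (rule Least_le) (use ex in simp)
qed

lemma nx_self: assumes "k \<le> n" "k \<in> E \<or> k = n" shows "nx E k = k"
  unfolding nx_def by (rule Least_equality) (use assms in auto)

lemma nx_step: assumes "k < n" "k \<notin> E" shows "nx E k = nx E (Suc k)"
proof -
  have "(\<lambda>e. k \<le> e \<and> (e \<in> E \<or> e = n)) = (\<lambda>e. Suc k \<le> e \<and> (e \<in> E \<or> e = n))"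
  proof
    fix e show "(k \<le> e \<and> (e \<in> E \<or> e = n)) = (Suc k \<le> e \<and> (e \<in> E \<or> e = n))"
      using assms by (cases "e = k") auto
  qed
  then show ?thesis unfolding nx_def by simp
qed

lemma Ms_le: assumes "1 \<le> k" "k \<le> n" shows "Ms E k \<le> L k"
  unfolding Ms_def using nx_props[OF assms(2), of E] assms by (intro Ldec) auto

lemma Ms_n: "Ms E n = 0"
  unfolding Ms_def using nx_self[of n E] Ln by simp

lemma Ms_in: "k \<le> n \<Longrightarrow> k \<in> E \<Longrightarrow> Ms E k = L k"
  unfolding Ms_def using nx_self by simp

lemma Ms_notin: "k < n \<Longrightarrow> k \<notin> E \<Longrightarrow> Ms E k = Ms E (Suc k)"
  unfolding Ms_def using nx_step by simp

context
  fixes E assumes EC: "E \<subseteq> Cor" and BE: "Bd \<subseteq> E"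
begin

lemma Ms_dec: assumes "1 \<le> k" "k < n" shows "Ms E (Suc k) \<le> Ms E k"
proof (cases "k \<in> E")
  case True
  have "Ms E (Suc k) \<le> L (Suc k)" using Ms_le assms by simp
  also have "\<dots> \<le> L k" using Ldec assms by simp
  finally show ?thesis using Ms_in True assms by simp
next
  case False then show ?thesis using Ms_notin assms by simp
qed

lemma Ms_drop: assumes "k \<in> E" shows "Ms E (Suc k) < Ms E k"
proof -
  have c: "1 \<le> k" "k < n" "L (Suc k) < L k" using Cor_sub assms EC by auto
  have "Ms E (Suc k) \<le> L (Suc k)" using Ms_le c by simp
  then show ?thesis using c Ms_in[of k E] assms by simp
qed

lemma drop_iff: assumes "1 \<le> k" "k < n" shows "Ms E (Suc k) < Ms E k \<longleftrightarrow> k \<in> E"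
  using Ms_drop Ms_notin assms by fastforce

lemma cE_1: "cE E 1 = Ms E 1" unfolding cE_def by simp

lemma cE_Suc: "1 \<le> i \<Longrightarrow> cE E (Suc i) = (if Ms E i < L i then L i else Ms E (Suc i))"
  unfolding cE_def by simp

lemma cE_bound: assumes k: "1 \<le> k" "k \<le> n" shows "cE E k \<le> n - k"
proof (cases "k = 1")
  case True
  have "Ms E 1 \<le> L 1" using Ms_le[of 1 E] k True by simp
  moreover have "L 1 \<le> n - 1" using Lb[of 1] k True by simp
  ultimately show ?thesis using cE_1 True by simp
next
  case False
  then obtain i where i: "k = Suc i" "1 \<le> i" using k by (cases k) auto
  show ?thesis
  proof (cases "Ms E i < L i")
    case True
    then have "i \<notin> E" using Ms_in[of i E] i k by auto
    show ?thesis
    proof (cases "i \<in> Cor")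
      case True
      then have "i \<notin> Bd" using \<open>i \<notin> E\<close> BE by auto
      then have "i + L i < n" using True unfolding Bd_def by simp
      then show ?thesis using cE_Suc[OF i(2)] \<open>Ms E i < L i\<close> i by simp
    next
      case False
      have ge: "1 \<le> L i" using \<open>Ms E i < L i\<close> by simp
      have "L (Suc i) \<le> L i" using Ldec i k by simp
      then have "L (Suc i) = L i" using False ge i k unfolding Cor_def corners_def by simp
      moreover have "L (Suc i) \<le> n - Suc i" using Lb k i by simp
      ultimately show ?thesis using cE_Suc[OF i(2)] \<open>Ms E i < L i\<close> i by simp
    qed
  next
    case False
    then have "cE E k = Ms E k" using cE_Suc[OF i(2)] i by simp
    also have "\<dots> \<le> L k" using Ms_le k by simp
    also have "\<dots> \<le> n - k" using Lb k by simp
    finally show ?thesis .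
  qed
qed

lemma L_max: assumes i: "1 \<le> i" "i < n" shows "L i = max (Ms E i) (cE E (Suc i))"
proof (cases "Ms E i < L i")
  case True then show ?thesis using cE_Suc[OF i(1)] by simp
next
  case False
  then have "Ms E i = L i" using Ms_le[of i E] i by simp
  moreover have "Ms E (Suc i) \<le> Ms E i" using Ms_dec i by simp
  ultimately show ?thesis using cE_Suc[OF i(1)] False by simp
qed

end
end

context seqs
begin

definition G :: "(nat \<Rightarrow> nat) \<Rightarrow> nat set" where
  "G \<pi> = {i. 1 \<le> i \<and> i < n \<and> Am n \<pi> (Suc (Suc i)) < Am n \<pi> (Suc i)}"

context
  fixes E \<pi> assumes EC: "E \<subseteq> Cor" and BE: "Bd \<subseteq> E"
    and perm: "\<pi> permutes {1..n}" and cd: "\<And>k. 1 \<le> k \<Longrightarrow> k \<le> n \<Longrightarrow> code \<pi> k = cE E k"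
begin

lemma A1: "1 \<le> k \<Longrightarrow> k \<le> n \<Longrightarrow> Am n \<pi> (Suc k) - 1 = Ms E k"
proof (induction k)
  case 0 then show ?case by simp
next
  case (Suc k)
  have sk: "Suc k \<in> {1..n}" using Suc.prems by simp
  have g: "Am n \<pi> (Suc (Suc k)) - 1 = min (Am n \<pi> (Suc k) - 1) (code \<pi> (Suc k))" by (rule GL3[OF perm sk])
  show ?case
  proof (cases "k = 0")
    case True
    have "Ms E 1 \<le> L 1" using Ms_le[of 1 E] Suc.prems True by simp
    moreover have "L 1 \<le> n - 1" using Lb[of 1] Suc.prems True by simp
    moreover have "code \<pi> 1 = Ms E 1" using cd[of 1] cE_1[OF EC BE] Suc.prems True by simp
    ultimately show ?thesis using g True by simp
  next
    case False
    then have k: "1 \<le> k" "k < n" using Suc.prems by auto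
    have IH: "Am n \<pi> (Suc k) - 1 = Ms E k" using Suc.IH k by simp
    have c: "code \<pi> (Suc k) = cE E (Suc k)" using cd Suc.prems by simp
    show ?thesis
    proof (cases "Ms E k < L k")
      case True
      then have "k \<notin> E" using Ms_in[of k E] k by auto
      then have "Ms E (Suc k) = Ms E k" using Ms_notin k by simp
      then show ?thesis using g IH c cE_Suc[OF EC BE k(1)] True by simp
    next
      case False
      then have "Ms E (Suc k) \<le> Ms E k" using Ms_dec[OF EC BE k] by simp
      then show ?thesis using g IH c cE_Suc[OF EC BE k(1)] False by simp
    qed
  qed
qed

lemma A2: assumes i: "1 \<le> i" "i \<le> n" shows "lam n \<pi> i = L i"
proof (cases "i = n")
  case True
  then show ?thesis unfolding lam_def using Am_last[OF perm] code_last[OF perm] Ln by simp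
next
  case False
  then have il: "i < n" using i by simp
  have "lam n \<pi> i = max (Ms E i) (cE E (Suc i))"
    unfolding lam_def using A1[OF i] cd[of "Suc i"] il by simp
  then show ?thesis using L_max[OF EC BE i(1) il] by simp
qed

lemma A3: "G \<pi> = E"
proof (rule set_eqI)
  fix i
  show "i \<in> G \<pi> \<longleftrightarrow> i \<in> E"
  proof (cases "1 \<le> i \<and> i < n")
    case True
    have a1: "1 \<le> Am n \<pi> (Suc i)" "1 \<le> Am n \<pi> (Suc (Suc i))" using Am_ge1[OF perm] True by auto
    have "Am n \<pi> (Suc (Suc i)) < Am n \<pi> (Suc i) \<longleftrightarrow> Am n \<pi> (Suc (Suc i)) - 1 < Am n \<pi> (Suc i) - 1"
      using a1 by linarith
    also have "\<dots> \<longleftrightarrow> Ms E (Suc i) < Ms E i" using A1[of i] A1[of "Suc i"] True by simp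
    also have "\<dots> \<longleftrightarrow> i \<in> E" using drop_iff[OF EC BE] True by simp
    finally show ?thesis unfolding G_def using True by simp
  next
    case False
    then have "i \<notin> E" using EC Cor_sub by blast
    then show ?thesis unfolding G_def using False by auto
  qed
qed

lemma A4_inv: "1 \<le> i \<Longrightarrow> i \<le> n \<Longrightarrow> card (pre \<pi> (Suc i) \<inter> {1..Suc (L i)}) \<le> 1"
proof (induction i)
  case 0 then show ?case by simp
next
  case (Suc i)
  show ?case
  proof (cases "i = 0")
    case True
    have "pre \<pi> (Suc (Suc i)) = {\<pi> 1}" using True pre_Suc[of 1 \<pi>] by (simp add: pre_def)
    then have "card (pre \<pi> (Suc (Suc i)) \<inter> {1..Suc (L (Suc i))}) \<le> card {\<pi> 1}"
      by (intro card_mono) auto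
    then show ?thesis by simp
  next
    case False
    then have i: "1 \<le> i" "i < n" using Suc.prems by auto
    define k where "k = Suc i"
    have ki: "k \<in> {1..n}" using Suc.prems k_def by simp
    have IH: "card (pre \<pi> k \<inter> {1..Suc (L i)}) \<le> 1" using Suc.IH i k_def by simp
    have Lk: "L k \<le> L i" using Ldec i k_def by simp
    have P': "pre \<pi> (Suc k) = insert (\<pi> k) (pre \<pi> k)" using pre_Suc[of k \<pi>] k_def by simp
    have Ak: "Am n \<pi> k - 1 = Ms E i" using A1 i k_def by simp
    have ck: "code \<pi> k = cE E k" using cd ki by simp
    have cEk: "cE E k = (if Ms E i < L i then L i else Ms E k)" using cE_Suc[OF EC BE i(1)] k_def by simp
    show ?thesis unfolding k_def[symmetric]
    proof (cases "Suc (L k) < \<pi> k")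
      case True
      then have "pre \<pi> (Suc k) \<inter> {1..Suc (L k)} \<subseteq> pre \<pi> k \<inter> {1..Suc (L i)}" using P' Lk by auto
      then have "card (pre \<pi> (Suc k) \<inter> {1..Suc (L k)}) \<le> card (pre \<pi> k \<inter> {1..Suc (L i)})"
        by (intro card_mono) simp_all
      then show "card (pre \<pi> (Suc k) \<inter> {1..Suc (L k)}) \<le> 1" using IH by simp
    next
      case False
      then have pk: "\<pi> k \<le> Suc (L k)" by simp
      consider (a) "Am n \<pi> k - 1 < code \<pi> k" | (b) "code \<pi> k = Am n \<pi> k - 1" | (c) "code \<pi> k < Am n \<pi> k - 1"
        by linarith
      then show "card (pre \<pi> (Suc k) \<inter> {1..Suc (L k)}) \<le> 1"
      proof cases
        case a
        have "Ms E k \<le> Ms E i" using Ms_dec[OF EC BE i] k_def by simp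
        then have "Ms E i < L i" "code \<pi> k = L i" using a Ak ck cEk by (auto split: if_splits)
        have "Am n \<pi> k < \<pi> k" using GL2(1)[OF perm ki] a by simp
        then have "code \<pi> k + 2 \<le> \<pi> k" using GLc(2)[OF perm ki] by simp
        then show ?thesis using pk Lk \<open>code \<pi> k = L i\<close> by simp
      next
        case b
        have "Am n \<pi> k < \<pi> k" using GL2(1)[OF perm ki] b by simp
        then have "code \<pi> k + 2 \<le> \<pi> k" using GLc(2)[OF perm ki] by simp
        have "\<not> Ms E i < L i"
        proof
          assume "Ms E i < L i"
          then have "code \<pi> k = L i" using ck cEk by simp
          with b Ak \<open>Ms E i < L i\<close> show False by simp
        qed
        then have "Ms E i = L i" using Ms_le[of i E] i by simp
        then show ?thesis using pk Lk b Ak \<open>code \<pi> k + 2 \<le> \<pi> k\<close> by simp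
      next
        case c
        have g1: "Am n \<pi> (Suc k) = \<pi> k" using GL1(2)[OF perm ki c] .
        have g2: "\<pi> k = Suc (code \<pi> k)" using GL1(1)[OF perm ki c] .
        have "Am n \<pi> (Suc k) - 1 = Ms E k" using A1 ki by simp
        then have "Ms E (Suc i) < Ms E i" using g1 g2 c Ak k_def by simp
        then have iE: "i \<in> E" using drop_iff[OF EC BE i(1) i(2)] by simp
        then have "L (Suc i) < L i" using EC Cor_sub by blast
        moreover have "Ms E i = L i" using Ms_in iE i by simp
        ultimately have big: "Suc (L k) < Am n \<pi> k" using Ak k_def by simp
        have "pre \<pi> k \<inter> {1..Suc (L k)} = {}"
        proof (rule equals0I)
          fix x assume "x \<in> pre \<pi> k \<inter> {1..Suc (L k)}"
          then have "x \<in> pre \<pi> k" "x \<le> Suc (L k)" by auto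
          from this(1) have "Am n \<pi> k \<le> x" by (rule Am_le)
          with big \<open>x \<le> Suc (L k)\<close> show False by simp
        qed
        then have "pre \<pi> (Suc k) \<inter> {1..Suc (L k)} \<subseteq> {\<pi> k}" using P' by auto
        then have "card (pre \<pi> (Suc k) \<inter> {1..Suc (L k)}) \<le> card {\<pi> k}" by (intro card_mono) simp_all
        then show ?thesis by simp
      qed
    qed
  qed
qed

lemma A4: "Sch n \<pi>"
  unfolding Sch_def
proof (intro allI impI)
  fix k j assume cell: "(k,j) \<in> diagram n \<pi>"
  then have c: "1 \<le> k" "k \<le> n" "1 \<le> j" "j < \<pi> k" "j \<notin> pre \<pi> k" using diag_iff[OF perm] by auto
  show "rank \<pi> (k,j) \<le> 1"
  proof (cases "k = 1")
    case True
    then show ?thesis using rank_eq[OF perm, of k j] by (simp add: pre_def)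
  next
    case False
    then obtain i where i: "k = Suc i" "1 \<le> i" using c by (cases k) auto
    have ki: "k \<in> {1..n}" using c by simp
    define P where "P = pre \<pi> k"
    have inv: "card (P \<inter> {1..Suc (L i)}) \<le> 1" using A4_inv[of i] i c unfolding P_def by simp
    have ckL: "code \<pi> k \<le> L i"
    proof -
      have "code \<pi> k = cE E k" using cd c by simp
      moreover have "Ms E k \<le> L k" using Ms_le[of k E] c by simp
      moreover have "L k \<le> L i" using Ldec i c by simp
      ultimately show ?thesis using cE_Suc[OF EC BE i(2)] i by auto
    qed
    have jle: "j \<le> Suc (L i)"
    proof (rule ccontr)
      assume "\<not> j \<le> Suc (L i)"
      then have jg: "Suc (L i) < j" by simp
      have sub: "insert j ({1..Suc (L i)} - P) \<subseteq> {j'. 1 \<le> j' \<and> j' < \<pi> k \<and> j' \<notin> pre \<pi> k}"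
        using c jg unfolding P_def by auto
      have fin: "finite {j'. 1 \<le> j' \<and> j' < \<pi> k \<and> j' \<notin> pre \<pi> k}"
        by (rule finite_subset[of _ "{..<\<pi> k}"]) auto
      have "card (insert j ({1..Suc (L i)} - P)) \<le> code \<pi> k"
        unfolding code_def using sub fin by (rule card_mono[rotated])
      moreover have "card (insert j ({1..Suc (L i)} - P)) = Suc (card ({1..Suc (L i)} - P))"
        using jg by simp
      moreover have "card ({1..Suc (L i)} - P) = Suc (L i) - card (P \<inter> {1..Suc (L i)})"
      proof -
        have "{1..Suc (L i)} - P = {1..Suc (L i)} - (P \<inter> {1..Suc (L i)})" by auto
        then show ?thesis by (simp add: card_Diff_subset)
      qed
      ultimately show False using inv ckL by linarith
    qed
    have "{p \<in> P. p < j} \<subseteq> P \<inter> {1..Suc (L i)}"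
      using jle pre_ge1[OF perm, of k] c unfolding P_def by auto
    then have "card {p \<in> P. p < j} \<le> card (P \<inter> {1..Suc (L i)})" by (intro card_mono) (simp_all add: P_def)
    then show ?thesis using rank_eq[OF perm, of k j] inv unfolding P_def by simp
  qed
qed

end
end

context seqs
begin

context
  fixes \<pi> assumes perm: "\<pi> permutes {1..n}" and S: "Sch n \<pi>"
    and lamL: "\<And>i. 1 \<le> i \<Longrightarrow> i \<le> n \<Longrightarrow> lam n \<pi> i = L i"
begin

lemma G_drop: assumes i: "i \<in> G \<pi>"
  shows "code \<pi> (Suc i) < Am n \<pi> (Suc i) - 1"
proof -
  have i1: "1 \<le> i" "i < n" "Am n \<pi> (Suc (Suc i)) < Am n \<pi> (Suc i)" using i unfolding G_def by auto
  have k: "Suc i \<in> {1..n}" using i1 by simp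
  have g: "Am n \<pi> (Suc (Suc i)) - 1 = min (Am n \<pi> (Suc i) - 1) (code \<pi> (Suc i))" by (rule GL3[OF perm k])
  have "1 \<le> Am n \<pi> (Suc (Suc i))" using Am_ge1[OF perm, of "Suc (Suc i)"] i1 by simp
  then show ?thesis using g i1(3) by linarith
qed

lemma B1: "G \<pi> \<subseteq> Cor" "Bd \<subseteq> G \<pi>"
proof -
  show "G \<pi> \<subseteq> Cor"
  proof
    fix i assume iG: "i \<in> G \<pi>"
    have i1: "1 \<le> i" "i < n" using iG unfolding G_def by auto
    define M where "M = Am n \<pi> (Suc i) - 1"
    have cM: "code \<pi> (Suc i) < M" using G_drop[OF iG] M_def by simp
    have Li: "L i = M" using lamL[of i] i1 cM unfolding lam_def M_def by simp
    have k: "Suc i \<in> {1..n}" using i1 by simp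
    have g: "Am n \<pi> (Suc (Suc i)) - 1 = code \<pi> (Suc i)"
      using GL3[OF perm k] cM M_def by simp
    have x: "code \<pi> (Suc (Suc i)) < M" using LemmaX[OF perm S, of "Suc i"] cM M_def i1 by simp
    have "L (Suc i) = max (Am n \<pi> (Suc (Suc i)) - 1) (code \<pi> (Suc (Suc i)))"
      using lamL[of "Suc i"] i1 unfolding lam_def by simp
    then have "L (Suc i) < L i" using g x cM Li by simp
    then show "i \<in> Cor" unfolding Cor_def corners_def using i1 Li cM by simp
  qed
  show "Bd \<subseteq> G \<pi>"
  proof
    fix i assume iB: "i \<in> Bd"
    then have c: "1 \<le> i" "i < n" "n \<le> i + L i" unfolding Bd_def using Cor_sub by auto
    show "i \<in> G \<pi>"
    proof (rule ccontr)
      assume "i \<notin> G \<pi>"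
      then have na: "\<not> Am n \<pi> (Suc (Suc i)) < Am n \<pi> (Suc i)" unfolding G_def using c by simp
      have k: "Suc i \<in> {1..n}" using c by simp
      have g: "Am n \<pi> (Suc (Suc i)) - 1 = min (Am n \<pi> (Suc i) - 1) (code \<pi> (Suc i))" by (rule GL3[OF perm k])
      have le: "Am n \<pi> (Suc (Suc i)) \<le> Am n \<pi> (Suc i)" using Am_Suc[of "Suc i" n \<pi>] by simp
      then have "Am n \<pi> (Suc i) - 1 \<le> code \<pi> (Suc i)" using g na by simp
      then have "L i = code \<pi> (Suc i)" using lamL[of i] c unfolding lam_def by simp
      moreover have "code \<pi> (Suc i) \<le> n - Suc i" using code_le[OF perm k] .
      ultimately show False using c by simp
    qed
  qed
qed

lemma B2: assumes k: "1 \<le> k" "k \<le> n" shows "Am n \<pi> (Suc k) - 1 = Ms (G \<pi>) k"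
  using k
proof (induction "n - k" arbitrary: k)
  case 0
  then have "k = n" by simp
  then show ?case using Am_last[OF perm] Ms_n by simp
next
  case (Suc m)
  then have kn: "k < n" by simp
  have IH: "Am n \<pi> (Suc (Suc k)) - 1 = Ms (G \<pi>) (Suc k)" using Suc.hyps Suc.prems kn by simp
  show ?case
  proof (cases "k \<in> G \<pi>")
    case True
    have "code \<pi> (Suc k) < Am n \<pi> (Suc k) - 1" using G_drop[OF True] .
    then have "L k = Am n \<pi> (Suc k) - 1" using lamL[of k] Suc.prems unfolding lam_def by simp
    then show ?thesis using Ms_in[of k "G \<pi>"] True kn by simp
  next
    case False
    then have "\<not> Am n \<pi> (Suc (Suc k)) < Am n \<pi> (Suc k)" unfolding G_def using Suc.prems kn by simp
    moreover have "Am n \<pi> (Suc (Suc k)) \<le> Am n \<pi> (Suc k)" using Am_Suc[of "Suc k" n \<pi>] by simp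
    ultimately have "Am n \<pi> (Suc (Suc k)) = Am n \<pi> (Suc k)" by simp
    then show ?thesis using IH Ms_notin[of k "G \<pi>"] False kn by simp
  qed
qed

lemma B3: assumes k: "1 \<le> k" "k \<le> n" shows "code \<pi> k = cE (G \<pi>) k"
proof (cases "k = 1")
  case True
  have k1: "1 \<in> {1..n}" using k by simp
  have g: "Am n \<pi> (Suc 1) - 1 = min (Am n \<pi> 1 - 1) (code \<pi> 1)" by (rule GL3[OF perm k1])
  have "code \<pi> 1 \<le> n - 1" using code_le[OF perm k1] .
  then have "Am n \<pi> (Suc 1) - 1 = code \<pi> 1" using g by simp
  then show ?thesis using B2[of 1] k True unfolding cE_def by simp
next
  case False
  then obtain i where i: "k = Suc i" "1 \<le> i" using k by (cases k) auto
  have il: "i < n" using i k by simp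
  have ki: "k \<in> {1..n}" using k by simp
  have Li: "L i = max (Ms (G \<pi>) i) (code \<pi> (Suc i))"
    using lamL[of i] B2[of i] i il unfolding lam_def by simp
  show ?thesis
  proof (cases "Ms (G \<pi>) i < L i")
    case True
    then have cL: "code \<pi> (Suc i) = L i" using Li by (auto simp: max_def split: if_splits)
    have "cE (G \<pi>) k = L i" using True i unfolding cE_def by simp
    then show ?thesis using cL i by simp
  next
    case False
    then have le: "code \<pi> (Suc i) \<le> Ms (G \<pi>) i" using Li by simp
    have "Am n \<pi> (Suc (Suc i)) - 1 = min (Am n \<pi> (Suc i) - 1) (code \<pi> (Suc i))"
      using GL3[OF perm ki] i by simp
    then have "Ms (G \<pi>) (Suc i) = code \<pi> (Suc i)" using B2[of i] B2[of "Suc i"] i il le k by simp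
    then show ?thesis using False i unfolding cE_def by simp
  qed
qed

end

definition FF where "FF = {\<pi>. \<pi> permutes {1..n} \<and> Sch n \<pi> \<and> (\<forall>i\<in>{1..n}. lam n \<pi> i = L i)}"
definition EE where "EE = {E. Bd \<subseteq> E \<and> E \<subseteq> Cor}"

lemma bijG: "bij_betw G FF EE"
proof (rule bij_betw_imageI)
  show "inj_on G FF"
  proof
    fix p q assume p: "p \<in> FF" and q: "q \<in> FF" and eq: "G p = G q"
    have pp: "p permutes {1..n}" "Sch n p" "\<And>i. 1 \<le> i \<Longrightarrow> i \<le> n \<Longrightarrow> lam n p i = L i" using p unfolding FF_def by auto
    have qq: "q permutes {1..n}" "Sch n q" "\<And>i. 1 \<le> i \<Longrightarrow> i \<le> n \<Longrightarrow> lam n q i = L i" using q unfolding FF_def by auto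
    show "p = q"
    proof (rule code_inj[OF pp(1) qq(1)])
      fix i assume "i \<in> {1..n}"
      then show "code p i = code q i" using B3[OF pp, of i] B3[OF qq, of i] eq by simp
    qed
  qed
  show "G ` FF = EE"
  proof
    show "G ` FF \<subseteq> EE"
    proof
      fix E assume "E \<in> G ` FF"
      then obtain p where p: "p \<in> FF" "E = G p" by blast
      have pp: "p permutes {1..n}" "Sch n p" "\<And>i. 1 \<le> i \<Longrightarrow> i \<le> n \<Longrightarrow> lam n p i = L i" using p unfolding FF_def by auto
      show "E \<in> EE" unfolding EE_def using B1[OF pp] p by simp
    qed
    show "EE \<subseteq> G ` FF"
    proof
      fix E assume "E \<in> EE"
      then have EC: "E \<subseteq> Cor" and BE: "Bd \<subseteq> E" unfolding EE_def by auto
      obtain p where p: "p permutes {1..n}" "\<forall>i\<in>{1..n}. code p i = cE E i"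
        using code_surj[of n "cE E"] cE_bound[OF EC BE] by auto
      have cd: "\<And>k. 1 \<le> k \<Longrightarrow> k \<le> n \<Longrightarrow> code p k = cE E k" using p(2) by simp
      have "p \<in> FF" unfolding FF_def using p(1) A4[OF EC BE p(1) cd] A2[OF EC BE p(1) cd] by simp
      moreover have "G p = E" by (rule A3[OF EC BE p(1) cd])
      ultimately show "E \<in> G ` FF" by blast
    qed
  qed
qed

lemma finInn: "finite Inn"
  unfolding Inn_def Cor_def corners_def by (rule finite_subset[of _ "{..<n}"]) auto

lemma cardEE: "card EE = 2 ^ card Inn"
proof -
  have disj: "Inn \<inter> Bd = {}" unfolding Inn_def Bd_def by auto
  have un: "Inn \<union> Bd = Cor" unfolding Inn_def Bd_def by auto
  have "bij_betw (\<lambda>T. T \<union> Bd) (Pow Inn) EE"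
  proof (rule bij_betw_imageI)
    show "inj_on (\<lambda>T. T \<union> Bd) (Pow Inn)"
    proof
      fix T T' assume "T \<in> Pow Inn" "T' \<in> Pow Inn" "T \<union> Bd = T' \<union> Bd"
      then show "T = T'" using disj by blast
    qed
    show "(\<lambda>T. T \<union> Bd) ` Pow Inn = EE"
    proof
      show "(\<lambda>T. T \<union> Bd) ` Pow Inn \<subseteq> EE" unfolding EE_def using un by auto
      show "EE \<subseteq> (\<lambda>T. T \<union> Bd) ` Pow Inn"
      proof
        fix E assume "E \<in> EE"
        then have "E = (E \<inter> Inn) \<union> Bd" "E \<inter> Inn \<in> Pow Inn" unfolding EE_def using un by auto
        then show "E \<in> (\<lambda>T. T \<union> Bd) ` Pow Inn" by blast
      qed
    qed
  qed
  then have "card EE = card (Pow Inn)" by (simp add: bij_betw_same_card)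
  then show ?thesis using card_Pow finInn by simp
qed

lemma cardFF: "card FF = 2 ^ card Inn"
  using bij_betw_same_card[OF bijG] cardEE by simp

end


theorem proposition2p8:
  fixes n :: nat and \<sigma> :: "nat \<Rightarrow> nat"
  assumes "\<sigma> permutes {1..n}" and "avoids n \<sigma> [1,3,2]"
  shows "card {\<pi>. \<pi> permutes {1..n} \<and> schroeder n \<pi> \<and> phi n \<pi> = \<sigma>}
         = 2 ^ card {(i,j) \<in> ess n \<sigma>. i + j < n}"
proof -
  have s: "\<sigma> permutes {1..n}" by (rule assms(1))
  have r0: "\<And>i j. (i,j) \<in> diagram n \<sigma> \<Longrightarrow> rank \<sigma> (i,j) = 0"
    using pat132[OF s assms(2)] by blast
  have de: "ess n \<sigma> = cells (code \<sigma>) (corners n (code \<sigma>))" "decr n (code \<sigma>)"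
    using dominant_ess[OF s r0] by auto
  interpret sq: seqs n "code \<sigma>"
  proof
    show "decr n (code \<sigma>)" by (rule de(2))
    show "code \<sigma> n = 0" by (rule code_n0[OF s])
    fix i assume "1 \<le> i" "i \<le> n"
    then show "code \<sigma> i \<le> n - i" using code_le[OF s, of i] by simp
  qed
  have lhs: "{\<pi>. \<pi> permutes {1..n} \<and> schroeder n \<pi> \<and> phi n \<pi> = \<sigma>} = sq.FF"
  proof (rule set_eqI)
    fix \<pi>
    show "\<pi> \<in> {\<pi>. \<pi> permutes {1..n} \<and> schroeder n \<pi> \<and> phi n \<pi> = \<sigma>} \<longleftrightarrow> \<pi> \<in> sq.FF"
    proof (cases "\<pi> permutes {1..n}")
      case True
      have sch: "schroeder n \<pi> \<longleftrightarrow> Sch n \<pi>" unfolding Sch_def by (rule patS[OF True])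
      show ?thesis
      proof (cases "Sch n \<pi>")
        case S: True
        have "phi n \<pi> = \<sigma> \<longleftrightarrow> (\<forall>i\<in>{1..n}. code \<sigma> i = lam n \<pi> i)"
          by (rule phi_char[OF True S s r0])
        then show ?thesis unfolding sq.FF_def using True S sch by auto
      next
        case False
        then show ?thesis unfolding sq.FF_def using sch by simp
      qed
    next
      case False
      then show ?thesis unfolding sq.FF_def by simp
    qed
  qed
  have rhs: "{(i,j) \<in> ess n \<sigma>. i + j < n} = (\<lambda>i. (i, code \<sigma> i)) ` sq.Inn"
    unfolding de(1) cells_def sq.Inn_def sq.Cor_def by auto
  have "card {(i,j) \<in> ess n \<sigma>. i + j < n} = card sq.Inn"
    unfolding rhs by (rule card_image) (auto simp: inj_on_def)
  then show ?thesis using lhs sq.cardFF by simp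
qed


end
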